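(* Let $t_1,t_2,t_3$ be three distinct tangent lines to $\mathcal O$, and let $P=t_1\cap t_2$, $Q=t_2\cap t_3$, $R=t_1\cap t_3$ (so $\Delta=\{\alpha_P,\alpha_Q,\alpha_R\}$ is a triangle tangent to $\mathcal O$). Then $H=\langle\alpha_P,\alpha_Q,\alpha_R\rangle$ is isomorphic to $\mathrm{PSL}(2,p)$ if $p\equiv 1\pmod 4$, and to $\mathrm{PGL}(2,p)$ if $p\equiv 3\pmod 4$.
   Context: Throughout, $q=p^n$ with $p$ an odd prime and $n\ge 1$; $\pi=\mathrm{PG}(2,q)$ is the Desarguesian projective plane over $\mathbb F_q$ and $\mathcal O$ is a fixed non-degenerate conic of $\pi$. $G$ denotes the group of projectivities of $\pi$ preserving $\mathcal O$, identified with $\mathrm{PGL}(2,q)$. Every involution of $G$ is a perspectivity with a center (a point not on $\mathcal O$), and for every point $X\in\pi\setminus\mathcal O$ there is exactly one involution $\alpha_X\in G$ with center $X$. A line is tangent to $\mathcal O$ if it meets $\mathcal O$ in exactly one point. *)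

theory Defs
  imports "HOL-Analysis.Determinants" "HOL-Algebra.Generated_Groups" "HOL-Computational_Algebra.Primes"
begin

definition msmult :: "'a::field \<Rightarrow> 'a^'n^'m \<Rightarrow> 'a^'n^'m" where
  "msmult c A = (\<chi> i j. c * A$i$j)"

definition vsmult :: "'a::field \<Rightarrow> 'a^'n \<Rightarrow> 'a^'n" where
  "vsmult c v = (\<chi> i. c * v$i)"

definition mcls :: "'a::field^'n^'n \<Rightarrow> ('a^'n^'n) set" where
  "mcls A = {msmult c A | c. c \<noteq> 0}"

definition pgl :: "('a::field^'n^'n) set monoid" where
  "pgl = \<lparr> carrier = {mcls A | A. det A \<noteq> 0},
          mult = (\<lambda>X Y. {A ** B | A B. A \<in> X \<and> B \<in> Y}),
          one = mcls (mat 1) \<rparr>"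

definition psl :: "('a::field^'n^'n) set monoid" where
  "psl = pgl \<lparr> carrier := {mcls A | A. det A = 1} \<rparr>"

definition pcls :: "'a::field^'n \<Rightarrow> ('a^'n) set" where
  "pcls v = {vsmult c v | c. c \<noteq> 0}"

text \<open>Points (and, dually, lines) of PG(2,F) are classes of nonzero vectors.\<close>
definition pg_points :: "('a::field^3) set set" where
  "pg_points = {pcls v | v. v \<noteq> 0}"

definition pg_lines :: "('a::field^3) set set" where
  "pg_lines = {pcls u | u. u \<noteq> 0}"

definition dotp :: "'a::field^'n \<Rightarrow> 'a^'n \<Rightarrow> 'a" where
  "dotp u v = (\<Sum>i\<in>UNIV. u$i * v$i)"

definition on_line :: "('a::field^3) set \<Rightarrow> ('a^3) set \<Rightarrow> bool" where
  "on_line X L \<longleftrightarrow> (\<forall>u\<in>L. \<forall>v\<in>X. dotp u v = 0)"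

definition conic :: "'a::field^3^3 \<Rightarrow> ('a^3) set set" where
  "conic M = {X \<in> pg_points. \<forall>v\<in>X. dotp v (M *v v) = 0}"

definition nondeg_conic_matrix :: "'a::field^3^3 \<Rightarrow> bool" where
  "nondeg_conic_matrix M \<longleftrightarrow> transpose M = M \<and> det M \<noteq> 0"

definition tangent :: "'a::field^3^3 \<Rightarrow> ('a^3) set \<Rightarrow> bool" where
  "tangent M L \<longleftrightarrow> L \<in> pg_lines \<and> card {X \<in> conic M. on_line X L} = 1"

definition papply :: "('a::field^3^3) set \<Rightarrow> ('a^3) set \<Rightarrow> ('a^3) set" where
  "papply g X = {A *v v | A v. A \<in> g \<and> v \<in> X}"

definition conic_group :: "'a::field^3^3 \<Rightarrow> ('a^3^3) set monoid" where
  "conic_group M = pgl \<lparr> carrier := {g \<in> carrier pgl. papply g ` conic M = conic M} \<rparr>"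

definition fixes_line :: "('a::field^3^3) set \<Rightarrow> ('a^3) set \<Rightarrow> bool" where
  "fixes_line g L \<longleftrightarrow>
     papply g ` {X \<in> pg_points. on_line X L} = {X \<in> pg_points. on_line X L}"

definition has_center :: "('a::field^3^3) set \<Rightarrow> ('a^3) set \<Rightarrow> bool" where
  "has_center g X \<longleftrightarrow> X \<in> pg_points \<and> (\<forall>L\<in>pg_lines. on_line X L \<longrightarrow> fixes_line g L)"

text \<open>The (unique) involution of the conic group with center X.\<close>
definition alpha :: "'a::field^3^3 \<Rightarrow> ('a^3) set \<Rightarrow> ('a^3^3) set" where
  "alpha M X = (THE g. g \<in> carrier (conic_group M) \<and> g \<noteq> \<one>\<^bsub>conic_group M\<^esub> \<and>
       g \<otimes>\<^bsub>conic_group M\<^esub> g = \<one>\<^bsub>conic_group M\<^esub> \<and> has_center g X)"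

end

theory Submission
  imports Defs "HOL-Number_Theory.Number_Theory"
begin

lemma card_zero: "of_nat CARD('a::{finite,comm_ring_1}) = (0::'a)"
proof -
  have inj: "inj (\<lambda>x::'a. x+1)" by (auto simp: inj_on_def)
  have surj: "(\<lambda>x::'a. x+1) ` UNIV = UNIV"
    by (metis UNIV_I diff_add_cancel image_eqI subsetI subset_antisym)
  have "(\<Sum>x\<in>UNIV. (x::'a) + 1) = (\<Sum>x\<in>(\<lambda>x. x+1) ` UNIV. (x::'a))"
    using sum.reindex[OF inj, of id] by simp
  also have "\<dots> = (\<Sum>x\<in>UNIV. x)" by (simp only: surj)
  finally have "(\<Sum>x\<in>UNIV. x) + of_nat CARD('a) = (\<Sum>x\<in>UNIV. (x::'a))"
    by (simp add: sum.distrib)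
  then show ?thesis by simp
qed


lemma char_p:
  assumes "prime p" "CARD('a::{field,finite}) = p ^ n"
  shows "(of_nat p :: 'a) = 0"
proof -
  have "(of_nat p :: 'a) ^ n = 0" using card_zero[where 'a='a] assms(2) by (simp add: of_nat_power)
  then show ?thesis by simp
qed

lemma of_int_zero_iff:
  assumes "prime p" "(of_nat p :: 'a::field) = 0"
  shows "(of_int x :: 'a) = 0 \<longleftrightarrow> int p dvd x"
proof
  assume h: "(of_int x :: 'a) = 0"
  show "int p dvd x"
  proof (rule ccontr)
    assume "\<not> int p dvd x"
    then have "coprime (int p) x" using assms(1)
      using prime_imp_coprime[of "int p" x] by simp
    then obtain u v where "u * int p + v * x = 1"
      by (metis bezout_int coprime_iff_gcd_eq_1)
    then have "(of_int (u * int p + v * x) :: 'a) = 1" by simp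
    then show False using h assms(2) by simp
  qed
next
  assume "int p dvd x"
  then obtain k where "x = int p * k" by blast
  then show "(of_int x :: 'a) = 0" using assms(2) by simp
qed

lemma of_int_eq_iff_cong:
  assumes "prime p" "(of_nat p :: 'a::field) = 0"
  shows "((of_int x :: 'a) = of_int y) \<longleftrightarrow> [x = y] (mod int p)"
proof -
  have "((of_int x :: 'a) = of_int y) \<longleftrightarrow> (of_int (x - y) :: 'a) = 0" by simp
  also have "\<dots> \<longleftrightarrow> int p dvd (x - y)" by (rule of_int_zero_iff[OF assms])
  also have "\<dots> \<longleftrightarrow> [x = y] (mod int p)" by (simp add: cong_iff_dvd_diff)
  finally show ?thesis .
qed

lemma prime_field_surj:
  assumes "prime p" "CARD('b::{field,finite}) = p"
  shows "\<exists>x. b = (of_int x :: 'b)"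
proof -
  have c: "(of_nat p :: 'b) = 0" using char_p[of p 1] assms by simp
  have inj: "inj_on (\<lambda>x. of_int x :: 'b) {0..<int p}"
  proof (rule inj_onI)
    fix x y assume "x \<in> {0..<int p}" "y \<in> {0..<int p}" "(of_int x :: 'b) = of_int y"
    then show "x = y" using of_int_eq_iff_cong[OF assms(1) c]
      by (simp add: cong_def)
  qed
  have "card ((\<lambda>x. of_int x :: 'b) ` {0..<int p}) = p"
    using card_image[OF inj] by simp
  then have "(\<lambda>x. of_int x :: 'b) ` {0..<int p} = UNIV"
    using assms(2) card_subset_eq[of UNIV "(\<lambda>x. of_int x :: 'b) ` {0..<int p}"] by simp
  then show ?thesis by blast
qed

definition iota :: "'b::field \<Rightarrow> 'a::field" where
  "iota b = of_int (SOME x. b = of_int x)"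

locale fields2 =
  fixes p n :: nat and ta :: "'a::{field,finite} itself" and tb :: "'b::{field,finite} itself"
  assumes pr: "prime p" and ca: "CARD('a) = p ^ n" and cb: "CARD('b) = p"
begin

lemma ca0: "(of_nat p :: 'a) = 0" using char_p[OF pr ca] .
lemma cb0: "(of_nat p :: 'b) = 0" using char_p[of p 1] pr cb by simp

lemma surjb: "\<exists>x. b = (of_int x :: 'b)" using prime_field_surj[OF pr cb] .

lemma iota_of_int [simp]: "(iota (of_int x :: 'b) :: 'a) = of_int x"
proof -
  have "\<exists>y. (of_int x :: 'b) = of_int y" by blast
  then have "(of_int x :: 'b) = of_int (SOME y. (of_int x :: 'b) = of_int y)" by (rule someI_ex)
  then have "[(SOME y. (of_int x :: 'b) = of_int y) = x] (mod int p)"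
    using of_int_eq_iff_cong[OF pr cb0] by (metis cong_sym)
  then show ?thesis unfolding iota_def using of_int_eq_iff_cong[OF pr ca0] by blast
qed

lemma iota_add [simp]: "(iota (x + y :: 'b) :: 'a) = iota x + iota y"
  using surjb[of x] surjb[of y] by (metis iota_of_int of_int_add)
lemma iota_mult [simp]: "(iota (x * y :: 'b) :: 'a) = iota x * iota y"
  using surjb[of x] surjb[of y] by (metis iota_of_int of_int_mult)
lemma iota_minus [simp]: "(iota (- x :: 'b) :: 'a) = - iota x"
  using surjb[of x] by (metis iota_of_int of_int_minus)
lemma iota_diff [simp]: "(iota (x - y :: 'b) :: 'a) = iota x - iota y"
  using surjb[of x] surjb[of y] by (metis iota_of_int of_int_diff)
lemma iota_0 [simp]: "(iota (0::'b) :: 'a) = 0" using iota_of_int[of 0] by simp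
lemma iota_1 [simp]: "(iota (1::'b) :: 'a) = 1" using iota_of_int[of 1] by simp
lemma iota_2 [simp]: "(iota (2::'b) :: 'a) = 2" using iota_of_int[of 2] by simp
lemma iota_inj: "((iota x :: 'a) = iota (y::'b)) \<longleftrightarrow> x = y"
proof -
  obtain u v where "x = of_int u" "y = of_int v" using surjb by metis
  then show ?thesis using of_int_eq_iff_cong[OF pr ca0] of_int_eq_iff_cong[OF pr cb0] by simp
qed
lemma iota_eq0 [simp]: "((iota x :: 'a) = 0) \<longleftrightarrow> (x::'b) = 0"
  using iota_inj[of x 0] by simp
lemma iota_inverse [simp]: "(iota (inverse x :: 'b) :: 'a) = inverse (iota x)"
proof (cases "x = 0")
  case False
  then have "(iota x :: 'a) * iota (inverse x) = 1" by (metis iota_1 iota_mult right_inverse)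
  then show ?thesis by (metis inverse_unique)
qed simp
lemma iota_divide [simp]: "(iota (x / y :: 'b) :: 'a) = iota x / iota y"
  by (simp add: divide_inverse)

end


context fields2 begin

lemma sq_iff_quadres: "(\<exists>e::'b. e * e = of_int a) \<longleftrightarrow> QuadRes (int p) a"
proof
  assume "\<exists>e::'b. e * e = of_int a"
  then obtain e :: 'b where e: "e * e = of_int a" by blast
  obtain y where "e = of_int y" using surjb by blast
  then have "(of_int (y^2) :: 'b) = of_int a" using e by (simp add: power2_eq_square)
  then have "[y^2 = a] (mod int p)" using of_int_eq_iff_cong[OF pr cb0] by blast
  then show "QuadRes (int p) a" unfolding QuadRes_def by blast
next
  assume "QuadRes (int p) a"
  then obtain y where "[y^2 = a] (mod int p)" unfolding QuadRes_def by blast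
  then have "(of_int (y^2) :: 'b) = of_int a" using of_int_eq_iff_cong[OF pr cb0] by blast
  then show "\<exists>e::'b. e * e = of_int a" by (intro exI[of _ "of_int y"]) (simp add: power2_eq_square)
qed

lemma p_gt2: "odd p \<Longrightarrow> 2 < int p" using prime_ge_2_nat[OF pr] by (cases "p = 2") auto

lemma notcong_1_m1: "odd p \<Longrightarrow> \<not> [1 = -1] (mod int p)"
proof
  assume "odd p" "[1 = -1] (mod int p)"
  then have "int p dvd 2" by (simp add: cong_iff_dvd_diff)
  then have "int p \<le> 2" by (rule zdvd_imp_le) simp
  then show False using p_gt2 \<open>odd p\<close> by simp
qed

lemma notcong_0_m1: "\<not> [0 = -1] (mod int p)"
proof
  assume "[0 = -1] (mod int p)"
  then have "int p dvd 1" by (simp add: cong_iff_dvd_diff)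
  then show False using pr by simp
qed

lemma notcong_0_1: "\<not> [0 = 1] (mod int p)"
  using notcong_0_m1 by (metis cong_minus_minus_iff minus_zero)

lemma euler: "odd p \<Longrightarrow> [Legendre a (int p) = a ^ ((p - 1) div 2)] (mod int p)"
  using euler_criterion[of p a] pr p_gt2 by simp

lemma sq1: assumes "odd p" "p mod 4 = 1" shows "\<exists>i::'b. i * i = -1"
proof -
  have ev: "even ((p - 1) div 2)" using assms(2) by presburger
  have "[Legendre (-1) (int p) = 1] (mod int p)"
    using euler[OF assms(1), of "-1"] ev by simp
  then have "QuadRes (int p) (-1)"
    unfolding Legendre_def using notcong_0_m1 notcong_0_1 notcong_1_m1[OF assms(1)]
    by (auto split: if_splits simp: cong_sym_eq)
  then show ?thesis using sq_iff_quadres[of "-1"] by simp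
qed

lemma sq3: assumes "odd p" "p mod 4 = 3" shows "\<not> (\<exists>i::'b. i * i = -1)"
proof
  assume "\<exists>i::'b. i * i = -1"
  then have q: "QuadRes (int p) (-1)" using sq_iff_quadres[of "-1"] by simp
  have od: "odd ((p - 1) div 2)" using assms(2) by presburger
  have "[Legendre (-1) (int p) = -1] (mod int p)"
    using euler[OF assms(1), of "-1"] od by simp
  then have "[1 = -1] (mod int p)" using q notcong_0_m1 unfolding Legendre_def
    by (auto split: if_splits)
  then show False using notcong_1_m1[OF assms(1)] by simp
qed

lemma sq3b: assumes "odd p" "p mod 4 = 3" "(d::'b) \<noteq> 0"
  shows "(\<exists>e::'b. e * e = d) \<or> (\<exists>e::'b. e * e = - d)"
proof (rule ccontr)
  assume H: "\<not> ?thesis"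
  obtain a where da: "d = of_int a" using surjb by blast
  have a0: "\<not> [a = 0] (mod int p)" using assms(3) da of_int_eq_iff_cong[OF pr cb0, of a 0] by simp
  then have am0: "\<not> [- a = 0] (mod int p)" by (metis cong_minus_minus_iff minus_zero)
  have n1: "\<not> QuadRes (int p) a" using H da sq_iff_quadres[of a] by auto
  have n2: "\<not> QuadRes (int p) (- a)" using H da sq_iff_quadres[of "- a"] by auto
  have od: "odd ((p - 1) div 2)" using assms(2) by presburger
  have e1: "[-1 = a ^ ((p - 1) div 2)] (mod int p)"
    using euler[OF assms(1), of a] n1 a0 unfolding Legendre_def by simp
  have e2: "[-1 = (- a) ^ ((p - 1) div 2)] (mod int p)"
    using euler[OF assms(1), of "- a"] n2 am0 unfolding Legendre_def by simp
  have "(- a) ^ ((p - 1) div 2) = - (a ^ ((p - 1) div 2))" using od by (simp add: power_minus_odd)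
  then have "[-1 = - (a ^ ((p - 1) div 2))] (mod int p)" using e2 by simp
  then have "[1 = a ^ ((p - 1) div 2)] (mod int p)" by (metis cong_minus_minus_iff minus_minus)
  then have "[1 = -1] (mod int p)" using e1 by (metis cong_sym cong_trans)
  then show False using notcong_1_m1[OF assms(1)] by simp
qed

end


lemma msmult_nth [simp]: "msmult c A $ i $ j = c * A $ i $ j"
  by (simp add: msmult_def)
lemma msmult_1 [simp]: "msmult 1 A = A" by (simp add: vec_eq_iff)
lemma msmult_msmult [simp]: "msmult c (msmult d A) = msmult (c*d) A" by (simp add: vec_eq_iff)
lemma msmult_mult_left: "msmult c A ** B = msmult c (A ** B)"
  by (simp add: vec_eq_iff matrix_matrix_mult_def sum_distrib_left mult.assoc)
lemma msmult_mult_right: "A ** msmult c B = msmult c (A ** B)"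
  by (simp add: vec_eq_iff matrix_matrix_mult_def sum_distrib_left mult.left_commute)
lemma msmult_mat: "msmult c (mat 1 :: 'a::field^'n^'n) = mat c"
  by (simp add: vec_eq_iff mat_def)
lemma msmult_eq_mat: "msmult c A = mat c ** (A :: 'a::field^'n^'n)"
  by (simp add: vec_eq_iff matrix_matrix_mult_def mat_def if_distrib if_distribR sum.delta cong: if_cong)
lemma det_mat: "det (mat c :: 'a::field^'n^'n) = c ^ CARD('n)"
  by (subst det_diagonal) (auto simp: mat_def)
lemma det_msmult: "det (msmult c A) = c ^ CARD('n) * det (A :: 'a::field^'n^'n)"
  by (simp only: msmult_eq_mat det_mul det_mat)
lemma msmult_vec: "msmult c A *v x = c *s (A *v x)"
  by (simp add: vec_eq_iff matrix_vector_mult_def sum_distrib_left mult.assoc)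

lemma mcls_self: "A \<in> mcls (A::'a::field^'n^'n)"
  unfolding mcls_def by (rule CollectI, rule exI[of _ 1]) simp

lemma mcls_eq_iff: "mcls A = mcls B \<longleftrightarrow> (\<exists>c. c \<noteq> 0 \<and> A = msmult c (B::'a::field^'n^'n))"
proof
  assume "mcls A = mcls B"
  then have "A \<in> mcls B" using mcls_self by metis
  then show "\<exists>c. c \<noteq> 0 \<and> A = msmult c B" unfolding mcls_def by blast
next
  assume "\<exists>c. c \<noteq> 0 \<and> A = msmult c B"
  then obtain c where c: "c \<noteq> 0" "A = msmult c B" by blast
  show "mcls A = mcls B"
  proof
    show "mcls A \<subseteq> mcls B" unfolding mcls_def using c by auto
    show "mcls B \<subseteq> mcls A" unfolding mcls_def
    proof
      fix X assume "X \<in> {msmult d B |d. d \<noteq> 0}"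
      then obtain d where "d \<noteq> 0" "X = msmult d B" by blast
      then have "X = msmult (d / c) A" "d / c \<noteq> 0" using c by auto
      then show "X \<in> {msmult d A |d. d \<noteq> 0}" by blast
    qed
  qed
qed

lemma mcls_mult: "{X ** Y | X Y. X \<in> mcls A \<and> Y \<in> mcls B} = mcls (A ** B :: 'a::field^'n^'n)"
proof
  show "{X ** Y | X Y. X \<in> mcls A \<and> Y \<in> mcls B} \<subseteq> mcls (A ** B)"
    unfolding mcls_def by (auto simp: msmult_mult_left msmult_mult_right)
  show "mcls (A ** B) \<subseteq> {X ** Y | X Y. X \<in> mcls A \<and> Y \<in> mcls B}"
  proof
    fix Z assume "Z \<in> mcls (A ** B)"
    then obtain c where "c \<noteq> 0" "Z = msmult c (A ** B)" unfolding mcls_def by blast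
    then have "Z = msmult c A ** B" "msmult c A \<in> mcls A" "B \<in> mcls B"
      using mcls_self[of B] unfolding mcls_def by (auto simp: msmult_mult_left)
    then show "Z \<in> {X ** Y | X Y. X \<in> mcls A \<and> Y \<in> mcls B}" by blast
  qed
qed

lemma pgl_mult [simp]: "mcls A \<otimes>\<^bsub>pgl\<^esub> mcls B = mcls (A ** B)"
  by (simp add: pgl_def mcls_mult)
lemma pgl_one [simp]: "\<one>\<^bsub>pgl\<^esub> = mcls (mat 1)" by (simp add: pgl_def)

lemma pgl_carrier_iff: "mcls A \<in> carrier pgl \<longleftrightarrow> det (A::'a::field^'n^'n) \<noteq> 0"
proof
  assume "mcls A \<in> carrier pgl"
  then obtain B where "mcls A = mcls B" "det B \<noteq> 0" by (auto simp: pgl_def)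
  then obtain c where "c \<noteq> 0" "A = msmult c B" using mcls_eq_iff by blast
  then show "det A \<noteq> 0" using \<open>det B \<noteq> 0\<close> by (simp add: det_msmult)
qed (auto simp: pgl_def)

lemma pgl_carrier_E: "X \<in> carrier pgl \<Longrightarrow> \<exists>A. X = mcls A \<and> det (A::'a::field^'n^'n) \<noteq> 0"
  by (auto simp: pgl_def)

lemma inv_mat: assumes "det (A::'a::field^'n^'n) \<noteq> 0"
  shows "A ** matrix_inv A = mat 1" "matrix_inv A ** A = mat 1"
proof -
  have "invertible A" using assms invertible_det_nz by blast
  then have "\<exists>A'. A ** A' = mat 1 \<and> A' ** A = mat 1" unfolding invertible_def by blast
  then have "A ** matrix_inv A = mat 1 \<and> matrix_inv A ** A = mat 1"
    unfolding matrix_inv_def by (rule someI_ex)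
  then show "A ** matrix_inv A = mat 1" "matrix_inv A ** A = mat 1" by auto
qed

lemma det_inv_nz: assumes "det (A::'a::field^'n^'n) \<noteq> 0" shows "det (matrix_inv A) \<noteq> 0"
  using inv_mat(1)[OF assms] det_mul[of A "matrix_inv A"] by auto

lemma det_nz_kernel: assumes "det (A::'a::field^'n^'n) \<noteq> 0" "A *v x = 0" shows "x = 0"
proof -
  have "x = matrix_inv A *v (A *v x)" by (simp add: matrix_vector_mul_assoc inv_mat[OF assms(1)])
  then show ?thesis using assms(2) by simp
qed

lemma group_pgl: "group (pgl :: ('a::field^'n^'n) set monoid)"
proof (rule groupI)
  fix X Y :: "('a^'n^'n) set" assume "X \<in> carrier pgl" "Y \<in> carrier pgl"
  then obtain A B where "X = mcls A" "det A \<noteq> 0" "Y = mcls B" "det B \<noteq> 0"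
    using pgl_carrier_E by metis
  then show "X \<otimes>\<^bsub>pgl\<^esub> Y \<in> carrier pgl" by (simp add: pgl_carrier_iff det_mul)
next
  show "\<one>\<^bsub>pgl\<^esub> \<in> (carrier pgl :: ('a^'n^'n) set set)" by (simp add: pgl_carrier_iff)
next
  fix X Y Z :: "('a^'n^'n) set" assume "X \<in> carrier pgl" "Y \<in> carrier pgl" "Z \<in> carrier pgl"
  then obtain A B C where "X = mcls A" "Y = mcls B" "Z = mcls C"
    using pgl_carrier_E by metis
  then show "X \<otimes>\<^bsub>pgl\<^esub> Y \<otimes>\<^bsub>pgl\<^esub> Z = X \<otimes>\<^bsub>pgl\<^esub> (Y \<otimes>\<^bsub>pgl\<^esub> Z)"
    by (simp add: matrix_mul_assoc)
next
  fix X :: "('a^'n^'n) set" assume "X \<in> carrier pgl"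
  then obtain A where "X = mcls A" using pgl_carrier_E by metis
  then show "\<one>\<^bsub>pgl\<^esub> \<otimes>\<^bsub>pgl\<^esub> X = X" by simp
next
  fix X :: "('a^'n^'n) set" assume "X \<in> carrier pgl"
  then obtain A where A: "X = mcls A" "det A \<noteq> 0" using pgl_carrier_E by metis
  then have "mcls (matrix_inv A) \<in> carrier pgl" "mcls (matrix_inv A) \<otimes>\<^bsub>pgl\<^esub> X = \<one>\<^bsub>pgl\<^esub>"
    by (simp_all add: pgl_carrier_iff det_inv_nz inv_mat)
  then show "\<exists>Y\<in>carrier pgl. Y \<otimes>\<^bsub>pgl\<^esub> X = \<one>\<^bsub>pgl\<^esub>" by blast
qed


lemma pgl_inv: assumes "det (A::'a::field^'n^'n) \<noteq> 0"
  shows "inv\<^bsub>pgl\<^esub> (mcls A) = mcls (matrix_inv A)"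
proof -
  interpret group "pgl :: ('a^'n^'n) set monoid" by (rule group_pgl)
  show ?thesis
    by (rule inv_equality) (simp_all add: pgl_carrier_iff assms det_inv_nz inv_mat)
qed

lemma psl_carrier_sub: "{mcls A | A. det (A::'a::field^'n^'n) = 1} \<subseteq> carrier pgl"
  by (auto simp: pgl_carrier_iff)

lemma subgroup_psl: "subgroup {mcls A | A. det (A::'a::field^'n^'n) = 1} pgl"
proof -
  interpret group "pgl :: ('a^'n^'n) set monoid" by (rule group_pgl)
  show ?thesis
  proof (rule subgroupI)
    show "{mcls A | A. det (A::'a::field^'n^'n) = 1} \<subseteq> carrier pgl" by (rule psl_carrier_sub)
    show "{mcls A | A. det (A::'a::field^'n^'n) = 1} \<noteq> {}" using det_I by blast
  next
    fix X assume "X \<in> {mcls A | A. det (A::'a::field^'n^'n) = 1}"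
    then obtain A where "X = mcls A" "det A = 1" by blast
    moreover have "det (matrix_inv A) = 1"
      using inv_mat(1)[of A] det_mul[of A "matrix_inv A"] \<open>det A = 1\<close> by simp
    ultimately have "inv\<^bsub>pgl\<^esub> X = mcls (matrix_inv A)" "det (matrix_inv A) = 1"
      using pgl_inv[of A] by auto
    then show "inv\<^bsub>pgl\<^esub> X \<in> {mcls A | A. det (A::'a::field^'n^'n) = 1}" by blast
  next
    fix X Y assume "X \<in> {mcls A | A. det (A::'a::field^'n^'n) = 1}" "Y \<in> {mcls A | A. det (A::'a::field^'n^'n) = 1}"
    then obtain A B where "X = mcls A" "det A = 1" "Y = mcls B" "det B = 1" by blast
    then show "X \<otimes>\<^bsub>pgl\<^esub> Y \<in> {mcls A | A. det (A::'a::field^'n^'n) = 1}"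
      by (auto simp: det_mul)
  qed
qed

lemma psl_carrier: "carrier psl = {mcls A | A. det (A::'a::field^'n^'n) = 1}"
  by (simp add: psl_def)

lemma group_psl: "group (psl :: ('a::field^'n^'n) set monoid)"
  unfolding psl_def using subgroup.subgroup_is_group[OF subgroup_psl group_pgl] by simp

definition mat2 :: "'a::field \<Rightarrow> 'a \<Rightarrow> 'a \<Rightarrow> 'a \<Rightarrow> 'a^2^2" where
  "mat2 a b c d = vector [vector [a, b], vector [c, d]]"

lemma mat2_nth [simp]: "mat2 a b c d $ 1 $ 1 = a" "mat2 a b c d $ 1 $ 2 = b"
  "mat2 a b c d $ 2 $ 1 = c" "mat2 a b c d $ 2 $ 2 = d"
  by (simp_all add: mat2_def)

lemma mat2_eq_iff: "mat2 a b c d = mat2 a' b' c' d' \<longleftrightarrow> a = a' \<and> b = b' \<and> c = c' \<and> d = d'"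
  by (auto simp: vec_eq_iff forall_2 mat2_def)

lemma mat2_eta: "(A::'a::field^2^2) = mat2 (A$1$1) (A$1$2) (A$2$1) (A$2$2)"
  by (simp add: vec_eq_iff forall_2)

lemma mat2_mult [simp]: "mat2 a b c d ** mat2 e f g h = mat2 (a*e+b*g) (a*f+b*h) (c*e+d*g) (c*f+d*h)"
  by (simp add: vec_eq_iff forall_2 matrix_matrix_mult_def sum_2)

lemma mat2_det [simp]: "det (mat2 a b c d) = a * d - b * c"
  by (simp add: det_2)

lemma mat2_msmult [simp]: "msmult k (mat2 a b c d) = mat2 (k*a) (k*b) (k*c) (k*d)"
  by (simp add: vec_eq_iff forall_2)

lemma mat2_one: "mat 1 = mat2 1 0 0 (1::'a::field)"
  by (simp add: vec_eq_iff forall_2 mat_def)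

abbreviation "UU t \<equiv> mat2 1 t 0 1"
abbreviation "LL t \<equiv> mat2 1 0 t 1"
abbreviation "AP \<equiv> mat2 1 0 0 (-1)"
abbreviation "AQ \<equiv> mat2 (-1) 0 2 1"
abbreviation "AR \<equiv> mat2 1 2 0 (-1)"

definition gens2 :: "('a::field^2^2) set set" where
  "gens2 = {mcls AP, mcls AQ, mcls AR}"

lemma gens2_carrier: "(2::'a::field) \<noteq> 0 \<Longrightarrow> (gens2 :: ('a^2^2) set set) \<subseteq> carrier pgl"
  by (simp add: gens2_def pgl_carrier_iff)

lemma SL_in_gen:
  fixes G :: "('a::field^2^2) set set"
  assumes two: "(2::'a) \<noteq> 0" and G: "G = generate pgl gens2"
    and num: "\<And>t::'a. \<exists>k::nat. t = of_nat k * (-2)"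
    and dA: "det (A::'a^2^2) = 1"
  shows "mcls A \<in> G"
proof -
  interpret group "pgl :: ('a^2^2) set monoid" by (rule group_pgl)
  have inG: "mcls AP \<in> G" "mcls AQ \<in> G" "mcls AR \<in> G"
    unfolding G gens2_def by (auto intro: generate.incl)
  have eng: "x \<otimes>\<^bsub>pgl\<^esub> y \<in> G" if "x \<in> G" "y \<in> G" for x y
    using that unfolding G by (rule generate.eng)
  have "mcls AR \<otimes>\<^bsub>pgl\<^esub> mcls AP \<in> G" by (rule eng[OF inG(3) inG(1)])
  then have U2: "mcls (UU (-2)) \<in> G" by simp
  have "mcls AQ \<otimes>\<^bsub>pgl\<^esub> mcls AP \<in> G" by (rule eng[OF inG(2) inG(1)])
  then have "mcls (mat2 (-1) 0 2 (-1)) \<in> G" by simp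
  moreover have "mcls (mat2 (-1) 0 2 (-1)) = mcls (LL (-2::'a))"
    by (subst mcls_eq_iff) (rule exI[of _ "-1"], simp)
  ultimately have L2: "mcls (LL (-2)) \<in> G" by simp
  have one: "mcls (mat2 1 0 0 1) \<in> G" unfolding G using generate.one[of pgl gens2] by (simp add: mat2_one)
  have Uk: "mcls (UU (of_nat k * (-2))) \<in> G" for k
  proof (induction k)
    case 0 then show ?case using one by simp
  next
    case (Suc k)
    then have "mcls (UU (of_nat k * (-2))) \<otimes>\<^bsub>pgl\<^esub> mcls (UU (-2)) \<in> G"
      using U2 by (rule eng)
    then show ?case by (simp add: algebra_simps)
  qed
  have Lk: "mcls (LL (of_nat k * (-2))) \<in> G" for k
  proof (induction k)
    case 0 then show ?case using one by simp
  next
    case (Suc k)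
    then have "mcls (LL (of_nat k * (-2))) \<otimes>\<^bsub>pgl\<^esub> mcls (LL (-2)) \<in> G"
      using L2 by (rule eng)
    then show ?case by (simp add: algebra_simps)
  qed
  have U: "mcls (UU t) \<in> G" for t using num[of t] Uk by auto
  have L: "mcls (LL t) \<in> G" for t using num[of t] Lk by auto
  have fact1: "mcls (mat2 a b c d) \<in> G" if "a * d - b * c = 1" "c \<noteq> 0" for a b c d
  proof -
    have "mcls (UU ((a-1)/c)) \<otimes>\<^bsub>pgl\<^esub> mcls (LL c) \<otimes>\<^bsub>pgl\<^esub> mcls (UU ((d-1)/c)) \<in> G"
      using U L by (intro eng)
    moreover have "UU ((a-1)/c) ** LL c ** UU ((d-1)/c) = mat2 a b c d"
      using that by (simp add: mat2_eq_iff field_simps)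
    ultimately show ?thesis by simp
  qed
  obtain a b c d where A: "A = mat2 a b c d" using mat2_eta by blast
  then have det1: "a * d - b * c = 1" using dA by simp
  show ?thesis
  proof (cases "c = 0")
    case False then show ?thesis using fact1 det1 A by simp
  next
    case True
    then have "a \<noteq> 0" using det1 by auto
    have "mcls (mat2 a b a (b + d)) \<in> G" using fact1[of a "b+d" b a] det1 True \<open>a \<noteq> 0\<close>
      by (simp add: algebra_simps)
    then have "mcls (LL (-1)) \<otimes>\<^bsub>pgl\<^esub> mcls (mat2 a b a (b + d)) \<in> G"
      using L by (intro eng)
    then show ?thesis using A True by simp
  qed
qed


lemma psl_sub_gen:
  assumes two: "(2::'a::field) \<noteq> 0" and num: "\<And>t::'a. \<exists>k::nat. t = of_nat k * (-2)"
  shows "carrier (psl :: ('a^2^2) set monoid) \<subseteq> generate pgl gens2"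
  using SL_in_gen[OF two refl num] by (auto simp: psl_carrier)

lemma mcls_det1: assumes "(i::'a::field) * i = -1" "det A = - (1::'a)" shows "mcls (A::'a^2^2) \<in> carrier psl"
proof -
  have i0: "i \<noteq> 0" using assms(1) by auto
  have "det (msmult i A) = 1" using assms by (simp add: det_msmult power2_eq_square)
  moreover have "mcls (msmult i A) = mcls A" using i0 by (subst mcls_eq_iff) auto
  ultimately show ?thesis by (auto simp: psl_carrier)
qed

lemma gen_psl:
  assumes two: "(2::'a::field) \<noteq> 0" and num: "\<And>t::'a. \<exists>k::nat. t = of_nat k * (-2)"
    and sq: "\<exists>i::'a. i * i = -1"
  shows "generate pgl (gens2 :: ('a^2^2) set set) = carrier psl"
proof
  interpret group "pgl :: ('a^2^2) set monoid" by (rule group_pgl)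
  obtain i :: 'a where i: "i * i = -1" using sq by blast
  have "gens2 \<subseteq> {mcls A | A. det (A::'a^2^2) = 1}"
    unfolding gens2_def using mcls_det1[OF i] by (auto simp: psl_carrier)
  then show "generate pgl (gens2 :: ('a^2^2) set set) \<subseteq> carrier psl"
    unfolding psl_carrier by (rule generate_subgroup_incl[OF _ subgroup_psl])
  show "carrier psl \<subseteq> generate pgl (gens2 :: ('a^2^2) set set)" by (rule psl_sub_gen[OF two num])
qed

lemma gen_pgl:
  assumes two: "(2::'a::field) \<noteq> 0" and num: "\<And>t::'a. \<exists>k::nat. t = of_nat k * (-2)"
    and sq: "\<And>d::'a. d \<noteq> 0 \<Longrightarrow> (\<exists>e. e * e = d) \<or> (\<exists>e. e * e = - d)"
  shows "generate pgl (gens2 :: ('a^2^2) set set) = carrier pgl"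
proof
  interpret group "pgl :: ('a^2^2) set monoid" by (rule group_pgl)
  show "generate pgl (gens2 :: ('a^2^2) set set) \<subseteq> carrier pgl"
    by (rule generate_incl[OF gens2_carrier[OF two]])
  show "carrier pgl \<subseteq> generate pgl (gens2 :: ('a^2^2) set set)"
  proof
    fix X :: "('a^2^2) set" assume "X \<in> carrier pgl"
    then obtain A where A: "X = mcls A" "det A \<noteq> 0" using pgl_carrier_E by metis
    have sl: "mcls B \<in> generate pgl gens2" if "det B = e * e" "e \<noteq> 0" for B :: "'a^2^2" and e
    proof -
      have "det (msmult (1/e) B) = 1" using that by (simp add: det_msmult power2_eq_square)
      moreover have "mcls (msmult (1/e) B) = mcls B" using that by (subst mcls_eq_iff) (rule exI[of _ "1/e"], simp)
      ultimately show ?thesis using psl_sub_gen[OF two num] by (auto simp: psl_carrier)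
    qed
    from sq[OF A(2)] show "X \<in> generate pgl gens2"
    proof
      assume "\<exists>e. e * e = det A"
      then obtain e where "e * e = det A" by blast
      moreover then have "e \<noteq> 0" using A by auto
      ultimately show ?thesis using sl[of A e] A by auto
    next
      assume "\<exists>e. e * e = - det A"
      then obtain e where e: "e * e = - det A" by blast
      then have "e \<noteq> 0" using A by auto
      then have "mcls (AP ** A) \<in> generate pgl gens2" using sl[of "AP ** A" e] e
        by (simp add: det_mul)
      moreover have "mcls AP \<in> generate pgl gens2" unfolding gens2_def by (auto intro: generate.incl)
      ultimately have "mcls AP \<otimes>\<^bsub>pgl\<^esub> mcls (AP ** A) \<in> generate pgl gens2" by (rule generate.eng[rotated])
      moreover have AA: "AP ** AP = (mat 1 :: 'a^2^2)" by (simp add: mat2_one)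
      have "AP ** (AP ** A) = A" by (simp only: matrix_mul_assoc AA) (simp only: matrix_mul_lid)
      ultimately show ?thesis using A by (simp only: pgl_mult)
    qed
  qed
qed


definition mat3 :: "'a::field \<Rightarrow> 'a \<Rightarrow> 'a \<Rightarrow> 'a \<Rightarrow> 'a \<Rightarrow> 'a \<Rightarrow> 'a \<Rightarrow> 'a \<Rightarrow> 'a \<Rightarrow> 'a^3^3" where
  "mat3 a b c d e f g h i = vector [vector [a, b, c], vector [d, e, f], vector [g, h, i]]"

lemma mat3_nth [simp]:
  "mat3 a b c d e f g h i $ 1 $ 1 = a" "mat3 a b c d e f g h i $ 1 $ 2 = b" "mat3 a b c d e f g h i $ 1 $ 3 = c"
  "mat3 a b c d e f g h i $ 2 $ 1 = d" "mat3 a b c d e f g h i $ 2 $ 2 = e" "mat3 a b c d e f g h i $ 2 $ 3 = f"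
  "mat3 a b c d e f g h i $ 3 $ 1 = g" "mat3 a b c d e f g h i $ 3 $ 2 = h" "mat3 a b c d e f g h i $ 3 $ 3 = i"
  by (simp_all add: mat3_def)

lemma mat3_eq_iff: "mat3 a b c d e f g h i = mat3 a' b' c' d' e' f' g' h' i' \<longleftrightarrow>
  a = a' \<and> b = b' \<and> c = c' \<and> d = d' \<and> e = e' \<and> f = f' \<and> g = g' \<and> h = h' \<and> i = i'"
  by (auto simp: vec_eq_iff forall_3 mat3_def)

lemma mat3_mult [simp]: "mat3 a b c d e f g h i ** mat3 a' b' c' d' e' f' g' h' i' =
  mat3 (a*a'+b*d'+c*g') (a*b'+b*e'+c*h') (a*c'+b*f'+c*i')
       (d*a'+e*d'+f*g') (d*b'+e*e'+f*h') (d*c'+e*f'+f*i')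
       (g*a'+h*d'+i*g') (g*b'+h*e'+i*h') (g*c'+h*f'+i*i')"
  by (simp add: vec_eq_iff forall_3 matrix_matrix_mult_def sum_3)

lemma mat3_msmult [simp]: "msmult k (mat3 a b c d e f g h i) = mat3 (k*a) (k*b) (k*c) (k*d) (k*e) (k*f) (k*g) (k*h) (k*i)"
  by (simp add: vec_eq_iff forall_3)

lemma mat3_det: "det (mat3 a b c d e f g h i) = a*e*i + b*f*g + c*d*h - a*f*h - b*d*i - c*e*g"
  by (simp add: det_3)

lemma mat3_one: "mat 1 = mat3 1 0 0 0 1 0 0 0 (1::'a::field)"
  by (simp add: vec_eq_iff forall_3 mat_def)

definition S3 :: "'a::field^2^2 \<Rightarrow> 'a^3^3" where
  "S3 A = (let a = A$1$1; b = A$1$2; c = A$2$1; d = A$2$2 in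
     mat3 (a*a) (2*a*b) (b*b) (a*c) (a*d+b*c) (b*d) (c*c) (2*c*d) (d*d))"

lemma S3_mat2: "S3 (mat2 a b c d) = mat3 (a*a) (2*a*b) (b*b) (a*c) (a*d+b*c) (b*d) (c*c) (2*c*d) (d*d)"
  by (simp add: S3_def)

lemma S3_mult: "S3 (A ** B) = S3 A ** S3 B"
proof -
  obtain a b c d where A: "A = mat2 a b c d" using mat2_eta by blast
  obtain e f g h where B: "B = mat2 e f g h" using mat2_eta by blast
  show ?thesis unfolding A B by (simp add: S3_mat2 mat3_eq_iff) (simp add: algebra_simps)
qed

lemma S3_msmult: "S3 (msmult k A) = msmult (k*k) (S3 A)"
proof -
  obtain a b c d where A: "A = mat2 a b c d" using mat2_eta by blast
  show ?thesis unfolding A by (simp add: S3_mat2 mat3_eq_iff) (simp add: algebra_simps)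
qed

lemma S3_one: "S3 (mat 1) = (mat 1 :: 'a::field^3^3)"
  by (simp add: mat2_one mat3_one S3_mat2)

lemma S3_det: "det (S3 A) = det A ^ 3"
proof -
  obtain a b c d where A: "A = mat2 a b c d" using mat2_eta by blast
  show ?thesis unfolding A by (simp add: S3_mat2 mat3_det) (simp add: algebra_simps power3_eq_cube)
qed

lemma S3_scalar:
  assumes "S3 N = msmult f (mat 1)" "f \<noteq> 0"
  shows "\<exists>n. N = msmult n (mat 1 :: 'a::field^2^2)"
proof -
  obtain a b c d where A: "N = mat2 a b c d" using mat2_eta by blast
  have e: "a*a = f" "b*b = 0" "c*c = 0" "a*d+b*c = f" using assms(1) unfolding A
    by (auto simp: S3_mat2 mat3_one mat3_eq_iff)
  then have "b = 0" "c = 0" "a * d = a * a" by auto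
  moreover have "a \<noteq> 0" using e assms(2) by auto
  ultimately have "d = a" by simp
  then show ?thesis using \<open>b = 0\<close> \<open>c = 0\<close> A by (intro exI[of _ a]) (simp add: mat2_one)
qed

lemma S3_inj:
  assumes "S3 A = msmult e (S3 B)" "e \<noteq> 0" "det B \<noteq> (0::'a::field)"
  shows "\<exists>c. A = msmult c B"
proof -
  obtain a b c d where B: "B = mat2 a b c d" using mat2_eta by blast
  define adj where "adj = mat2 d (-b) (-c) a"
  have adjB: "B ** adj = msmult (det B) (mat 1)" "adj ** B = msmult (det B) (mat 1)"
    unfolding B adj_def by (simp_all add: mat2_one algebra_simps)
  have "S3 (A ** adj) = msmult e (S3 (B ** adj))" using assms(1) by (simp add: S3_mult msmult_mult_left)
  also have "\<dots> = msmult (e * (det B * det B)) (mat 1)" by (simp add: adjB S3_msmult S3_one)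
  finally obtain n where n: "A ** adj = msmult n (mat 1)"
    using S3_scalar assms by (metis mult_eq_0_iff)
  have "A ** (adj ** B) = msmult n B" by (simp add: matrix_mul_assoc n msmult_mult_left)
  then have "msmult (det B) A = msmult n B" by (simp add: adjB msmult_mult_right)
  then have "A = msmult (n / det B) B" using assms(3)
    by (metis (no_types, lifting) msmult_1 msmult_msmult nonzero_divide_eq_eq divide_inverse mult.commute right_inverse)
  then show ?thesis by blast
qed


definition imap :: "'b::field^2^2 \<Rightarrow> 'a::field^2^2" where
  "imap A = mat2 (iota (A$1$1)) (iota (A$1$2)) (iota (A$2$1)) (iota (A$2$2))"

definition KK :: "'a::field^3^3 \<Rightarrow> 'b::field^2^2 \<Rightarrow> 'a^3^3" where
  "KK Cm A = Cm ** S3 (imap A) ** matrix_inv Cm"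

definition Phi :: "'a::field^3^3 \<Rightarrow> ('b::field^2^2) set \<Rightarrow> ('a^3^3) set" where
  "Phi Cm X = mcls (KK Cm (SOME A. A \<in> X))"

context fields2 begin

lemma imap_mat2 [simp]: "(imap (mat2 a b c d :: 'b^2^2) :: 'a^2^2) = mat2 (iota a) (iota b) (iota c) (iota d)"
  by (simp add: imap_def)

lemma imap_mult: "(imap (A ** B :: 'b^2^2) :: 'a^2^2) = imap A ** imap B"
proof -
  obtain a b c d where A: "A = mat2 a b c d" using mat2_eta by blast
  obtain e f g h where B: "B = mat2 e f g h" using mat2_eta by blast
  show ?thesis unfolding A B by simp
qed

lemma imap_msmult: "(imap (msmult k A :: 'b^2^2) :: 'a^2^2) = msmult (iota k) (imap A)"
proof -
  obtain a b c d where A: "A = mat2 a b c d" using mat2_eta by blast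
  show ?thesis unfolding A by simp
qed

lemma imap_det: "det (imap (A :: 'b^2^2) :: 'a^2^2) = iota (det A)"
proof -
  obtain a b c d where A: "A = mat2 a b c d" using mat2_eta by blast
  show ?thesis unfolding A by simp
qed

lemma imap_nth: "(imap (A :: 'b^2^2) :: 'a^2^2) $ i $ j = iota (A $ i $ j)"
  using exhaust_2[of i] exhaust_2[of j] by (auto simp: imap_def)

lemma imap_scalar:
  assumes "(imap A :: 'a^2^2) = msmult e (imap B)" "det (A::'b^2^2) \<noteq> 0" "det (B::'b^2^2) \<noteq> 0"
  shows "\<exists>c. c \<noteq> 0 \<and> A = msmult c B"
proof -
  have "B \<noteq> 0" using assms(3) by (auto simp: det_2)
  then obtain j k where jk: "B $ j $ k \<noteq> 0" by (metis vec_eq_iff zero_index)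
  define d where "d = A $ j $ k / B $ j $ k"
  have ent: "(iota (A $ i $ l) :: 'a) = e * iota (B $ i $ l)" for i l
    using arg_cong[OF assms(1), of "\<lambda>M. M $ i $ l"] by (simp add: imap_nth)
  have "(iota (B $ j $ k) :: 'a) \<noteq> 0" using jk by simp
  then have ed: "e = (iota d :: 'a)" using ent[of j k] by (simp add: d_def field_simps)
  have "A $ i $ l = d * B $ i $ l" for i l
    using ent[of i l] ed iota_inj[of "A $ i $ l" "d * B $ i $ l"] by simp
  then have AB: "A = msmult d B" by (simp add: vec_eq_iff)
  then have "d \<noteq> 0" using assms(2) by (auto simp: det_msmult)
  then show ?thesis using AB by blast
qed

lemma KK_msmult: "det Cm \<noteq> 0 \<Longrightarrow> KK Cm (msmult c A :: 'b^2^2) = msmult ((iota c * iota c)::'a) (KK Cm A)"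
  by (simp add: KK_def imap_msmult S3_msmult msmult_mult_left msmult_mult_right)

lemma Phi_mcls: assumes "det (Cm::'a^3^3) \<noteq> 0"
  shows "Phi Cm (mcls (A::'b^2^2)) = mcls (KK Cm A)"
proof -
  have "\<exists>A'. A' \<in> mcls A" using mcls_self by blast
  then have "(SOME A'. A' \<in> mcls A) \<in> mcls A" by (rule someI_ex)
  then obtain c where c: "c \<noteq> 0" "(SOME A'. A' \<in> mcls A) = msmult c A" unfolding mcls_def by blast
  show ?thesis unfolding Phi_def c(2) KK_msmult[OF assms]
    using c(1) by (subst mcls_eq_iff) (rule exI[of _ "iota c * iota c"], simp)
qed

lemma KK_mult: assumes "det (Cm::'a^3^3) \<noteq> 0"
  shows "KK Cm (A ** B :: 'b^2^2) = KK Cm A ** KK Cm B"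
proof -
  have "KK Cm A ** KK Cm B = Cm ** S3 (imap A) ** (matrix_inv Cm ** Cm) ** S3 (imap B) ** matrix_inv Cm"
    unfolding KK_def by (simp add: matrix_mul_assoc)
  also have "\<dots> = Cm ** (S3 (imap A) ** S3 (imap B)) ** matrix_inv Cm"
    by (simp add: inv_mat[OF assms] matrix_mul_assoc)
  finally show ?thesis by (simp add: KK_def imap_mult S3_mult)
qed

lemma KK_det: assumes "det (Cm::'a^3^3) \<noteq> 0" "det (A::'b^2^2) \<noteq> 0"
  shows "det (KK Cm A) \<noteq> 0"
  using assms det_inv_nz[OF assms(1)] by (simp add: KK_def det_mul S3_det imap_det)

lemma Phi_hom: assumes "det (Cm::'a^3^3) \<noteq> 0"
  shows "Phi Cm \<in> hom (pgl :: ('b^2^2) set monoid) (pgl :: ('a^3^3) set monoid)"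
proof (rule homI)
  fix X :: "('b^2^2) set" assume "X \<in> carrier pgl"
  then obtain A where "X = mcls A" "det A \<noteq> 0" using pgl_carrier_E by metis
  then show "Phi Cm X \<in> carrier pgl" using Phi_mcls[OF assms] KK_det[OF assms] by (simp add: pgl_carrier_iff)
next
  fix X Y :: "('b^2^2) set" assume "X \<in> carrier pgl" "Y \<in> carrier pgl"
  then obtain A B where "X = mcls A" "Y = mcls B" using pgl_carrier_E by metis
  then show "Phi Cm (X \<otimes>\<^bsub>pgl\<^esub> Y) = Phi Cm X \<otimes>\<^bsub>pgl\<^esub> Phi Cm Y"
    by (simp add: Phi_mcls[OF assms] KK_mult[OF assms])
qed

lemma Phi_inj: assumes "det (Cm::'a^3^3) \<noteq> 0"
  shows "inj_on (Phi Cm) (carrier (pgl :: ('b^2^2) set monoid))"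
proof (rule inj_onI)
  fix X Y :: "('b^2^2) set" assume "X \<in> carrier pgl" "Y \<in> carrier pgl" and eq: "Phi Cm X = Phi Cm Y"
  then obtain A B where A: "X = mcls A" "det A \<noteq> 0" and B: "Y = mcls B" "det B \<noteq> 0"
    using pgl_carrier_E by metis
  then have "mcls (KK Cm A) = mcls (KK Cm B)" using eq by (simp add: Phi_mcls[OF assms])
  then obtain e where e: "e \<noteq> 0" "KK Cm A = msmult e (KK Cm B)" using mcls_eq_iff by blast
  have inv: "matrix_inv Cm ** (Cm ** M ** matrix_inv Cm) ** Cm = M" for M :: "'a^3^3"
    by (simp add: matrix_mul_assoc inv_mat[OF assms]) (simp flip: matrix_mul_assoc add: inv_mat[OF assms])
  have "S3 (imap A) = msmult e (S3 (imap B) :: 'a^3^3)"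
    using arg_cong[OF e(2), of "\<lambda>M. matrix_inv Cm ** M ** Cm"]
    unfolding KK_def by (simp add: inv msmult_mult_left msmult_mult_right)
  then obtain c where "(imap A :: 'a^2^2) = msmult c (imap B)"
    using S3_inj e(1) B(2) imap_det[of B] by force
  then obtain d where "d \<noteq> 0" "A = msmult d B" using imap_scalar A(2) B(2) by blast
  then show "X = Y" using A B by (simp add: mcls_eq_iff) blast
qed

end


lemma vsmult_eq [simp]: "vsmult c v = c *s v" by (simp add: vsmult_def vector_scalar_mult_def)

lemma dotp_sym: "dotp u v = dotp v (u::'a::field^'n)" by (simp add: dotp_def mult.commute)
lemma dotp_add_left [simp]: "dotp (u + w) v = dotp u v + dotp w (v::'a::field^'n)"
  by (simp add: dotp_def sum.distrib algebra_simps)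
lemma dotp_add_right [simp]: "dotp v (u + w) = dotp v u + dotp v (w::'a::field^'n)"
  by (simp add: dotp_def sum.distrib algebra_simps)
lemma dotp_diff_left [simp]: "dotp (u - w) v = dotp u v - dotp w (v::'a::field^'n)"
  by (simp add: dotp_def sum_subtractf algebra_simps)
lemma dotp_diff_right [simp]: "dotp v (u - w) = dotp v u - dotp v (w::'a::field^'n)"
  by (simp add: dotp_def sum_subtractf algebra_simps)
lemma dotp_smult_left [simp]: "dotp (c *s u) v = c * dotp u (v::'a::field^'n)"
  by (simp add: dotp_def sum_distrib_left algebra_simps)
lemma dotp_smult_right [simp]: "dotp v (c *s u) = c * dotp v (u::'a::field^'n)"
  by (simp add: dotp_def sum_distrib_left algebra_simps)
lemma dotp_neg_left [simp]: "dotp (- u) v = - dotp u (v::'a::field^'n)"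
  by (simp add: dotp_def sum_negf)
lemma dotp_neg_right [simp]: "dotp v (- u) = - dotp v (u::'a::field^'n)"
  by (simp add: dotp_def sum_negf)
lemma dotp_zero [simp]: "dotp 0 v = 0" "dotp v 0 = (0::'a::field)"
  by (simp_all add: dotp_def)
lemma dotp_axis [simp]: "dotp x (axis i 1) = (x::'a::field^'n) $ i"
  by (simp add: dotp_def axis_def if_distrib if_distribR cong: if_cong)

lemma mv_add [simp]: "M *v (x + y) = M *v x + M *v (y::'a::field^'n)"
  by (simp add: matrix_vector_mult_def vec_eq_iff sum.distrib algebra_simps)
lemma mv_diff [simp]: "M *v (x - y) = M *v x - M *v (y::'a::field^'n)"
  by (simp add: matrix_vector_mult_def vec_eq_iff sum_subtractf algebra_simps)
lemma mv_smult [simp]: "M *v (c *s x) = c *s (M *v (x::'a::field^'n))"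
  by (simp add: matrix_vector_mult_def vec_eq_iff sum_distrib_left algebra_simps)
lemma mv_neg [simp]: "M *v (- x) = - (M *v (x::'a::field^'n))"
  by (simp add: matrix_vector_mult_def vec_eq_iff sum_negf)
lemma mv_zero [simp]: "M *v 0 = (0::'a::field^'n)"
  by (simp add: matrix_vector_mult_def vec_eq_iff)

lemma dotp_mv_transpose: "dotp x (M *v y) = dotp (transpose M *v x) (y::'a::field^'n)"
  unfolding dotp_def matrix_vector_mult_def transpose_def
  by (simp add: sum_distrib_left sum_distrib_right algebra_simps) (rule sum.swap)

definition bf :: "'a::field^3^3 \<Rightarrow> 'a^3 \<Rightarrow> 'a^3 \<Rightarrow> 'a" where
  "bf M x y = dotp x (M *v y)"

lemma bf_add_left [simp]: "bf M (x + y) z = bf M x z + bf M y z" by (simp add: bf_def)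
lemma bf_add_right [simp]: "bf M z (x + y) = bf M z x + bf M z y" by (simp add: bf_def)
lemma bf_diff_left [simp]: "bf M (x - y) z = bf M x z - bf M y z" by (simp add: bf_def)
lemma bf_diff_right [simp]: "bf M z (x - y) = bf M z x - bf M z y" by (simp add: bf_def)
lemma bf_smult_left [simp]: "bf M (c *s x) z = c * bf M x z" by (simp add: bf_def)
lemma bf_smult_right [simp]: "bf M z (c *s x) = c * bf M z x" by (simp add: bf_def)
lemma bf_neg_left [simp]: "bf M (- x) z = - bf M x z" by (simp add: bf_def)
lemma bf_neg_right [simp]: "bf M z (- x) = - bf M z x" by (simp add: bf_def)
lemma bf_zero [simp]: "bf M 0 z = 0" "bf M z 0 = 0" by (simp_all add: bf_def)

lemma bf_sym: "transpose M = M \<Longrightarrow> bf M x y = bf M y x"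
  unfolding bf_def using dotp_mv_transpose[of x M y] by (simp add: dotp_sym)

lemma dotp_Mv: "transpose M = M \<Longrightarrow> dotp (M *v x) y = bf M x y"
  unfolding bf_def using dotp_mv_transpose[of x M y] by (simp add: dotp_sym)

definition cross :: "'a::field^3 \<Rightarrow> 'a^3 \<Rightarrow> 'a^3" where
  "cross u v = vector [u$2 * v$3 - u$3 * v$2, u$3 * v$1 - u$1 * v$3, u$1 * v$2 - u$2 * v$1]"

lemma dotp3: "dotp (u::'a::field^3) v = u$1 * v$1 + u$2 * v$2 + u$3 * v$3"
  by (simp add: dotp_def sum_3)

lemma cross_nth: "cross u v $ 1 = u$2 * v$3 - u$3 * v$2" "cross u v $ 2 = u$3 * v$1 - u$1 * v$3"
  "cross u v $ 3 = u$1 * v$2 - u$2 * v$1"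
  by (simp_all add: cross_def)

lemma dotp_cross1 [simp]: "dotp u (cross u v) = 0" by (simp add: dotp3 cross_nth algebra_simps)
lemma dotp_cross2 [simp]: "dotp v (cross u v) = 0" by (simp add: dotp3 cross_nth algebra_simps)
lemma dotp_cross1' [simp]: "dotp (cross u v) u = 0" by (simp add: dotp3 cross_nth algebra_simps)
lemma dotp_cross2' [simp]: "dotp (cross u v) v = 0" by (simp add: dotp3 cross_nth algebra_simps)

lemma cross_antisym: "cross u v = - cross v u"
  by (simp add: vec_eq_iff forall_3 cross_nth)

lemma cross_add_right [simp]: "cross u (v + w) = cross u v + cross u w"
  by (simp add: vec_eq_iff forall_3 cross_nth algebra_simps)

lemma triple_swap: "dotp m (cross u e) = dotp (cross m u) e"
  by (simp add: dotp3 cross_nth algebra_simps)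

lemma cross_cross: "cross (cross u u') w = dotp u w *s u' - dotp u' w *s u"
  by (simp add: vec_eq_iff forall_3 cross_nth dotp3 algebra_simps)

lemma cross_zero:
  assumes "cross u v = 0" "v \<noteq> (0::'a::field^3)"
  shows "\<exists>c. u = c *s v"
proof -
  have e: "u$2 * v$3 = u$3 * v$2" "u$3 * v$1 = u$1 * v$3" "u$1 * v$2 = u$2 * v$1"
    using assms(1) by (simp_all add: vec_eq_iff forall_3 cross_nth)
  obtain k where k: "v $ k \<noteq> 0" using assms(2) by (metis vec_eq_iff zero_index)
  have r: "u $ i * v $ k = u $ k * v $ i" for i
    using exhaust_3[of i] exhaust_3[of k] by (elim disjE) (simp_all, (metis e)+)
  have "u $ i = (u$k / v$k) * v $ i" for i
  proof -
    have "u $ i = (u $ i * v $ k) / v $ k" using k by simp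
    also have "\<dots> = (u$k / v$k) * v$i" using r[of i] by simp
    finally show ?thesis .
  qed
  then have "\<exists>c. \<forall>i. u $ i = c * v $ i" by blast
  then show ?thesis by (auto simp: vec_eq_iff)
qed

lemma two_planes:
  assumes "dotp u w = 0" "dotp u' w = 0" "cross u u' \<noteq> (0::'a::field^3)"
  shows "\<exists>c. w = c *s cross u u'"
proof -
  have "cross (cross u u') w = 0" using assms by (simp add: cross_cross dotp_sym)
  then have "cross w (cross u u') = 0" by (metis cross_antisym neg_equal_0_iff_equal)
  then show ?thesis using cross_zero assms(3) by blast
qed

lemma smult_cancel: "c *s a = d *s a \<Longrightarrow> a \<noteq> (0::'a::field^'n) \<Longrightarrow> c = d"
  by (metis vector_sub_rdistrib eq_iff_diff_eq_0 vector_mul_eq_0)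


lemma pcls_self: "v \<in> pcls (v::'a::field^'n)"
  unfolding pcls_def by (rule CollectI, rule exI[of _ 1]) simp

lemma pcls_eq_iff: "pcls u = pcls v \<longleftrightarrow> (\<exists>c. c \<noteq> 0 \<and> u = c *s (v::'a::field^'n))"
proof
  assume "pcls u = pcls v"
  then have "u \<in> pcls v" using pcls_self by metis
  then show "\<exists>c. c \<noteq> 0 \<and> u = c *s v" unfolding pcls_def by auto
next
  assume "\<exists>c. c \<noteq> 0 \<and> u = c *s v"
  then obtain c where c: "c \<noteq> 0" "u = c *s v" by blast
  show "pcls u = pcls v"
  proof
    show "pcls u \<subseteq> pcls v" unfolding pcls_def using c by auto
    show "pcls v \<subseteq> pcls u" unfolding pcls_def
    proof
      fix X assume "X \<in> {vsmult d v |d. d \<noteq> 0}"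
      then obtain d where "d \<noteq> 0" "X = d *s v" by auto
      then have "X = (d / c) *s u" "d / c \<noteq> 0" using c by auto
      then show "X \<in> {vsmult d u |d. d \<noteq> 0}" by auto
    qed
  qed
qed

lemma pcls_smult: "c \<noteq> 0 \<Longrightarrow> pcls (c *s v) = pcls (v::'a::field^'n)"
  using pcls_eq_iff by blast

lemma pg_points_iff: "X \<in> pg_points \<longleftrightarrow> (\<exists>v. v \<noteq> 0 \<and> X = pcls v)"
  by (auto simp: pg_points_def)
lemma pg_lines_iff: "L \<in> pg_lines \<longleftrightarrow> (\<exists>v. v \<noteq> 0 \<and> L = pcls v)"
  by (auto simp: pg_lines_def)
lemma pcls_point: "v \<noteq> 0 \<Longrightarrow> pcls v \<in> pg_points" by (auto simp: pg_points_def)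
lemma pcls_line: "v \<noteq> 0 \<Longrightarrow> pcls v \<in> pg_lines" by (auto simp: pg_lines_def)

lemma on_line_pcls: "on_line (pcls x) (pcls u) \<longleftrightarrow> dotp u x = 0"
proof
  assume "on_line (pcls x) (pcls u)"
  then show "dotp u x = 0" unfolding on_line_def using pcls_self[of u] pcls_self[of x] by blast
qed (auto simp: on_line_def pcls_def)

lemma conic_pcls: "v \<noteq> 0 \<Longrightarrow> pcls v \<in> conic M \<longleftrightarrow> bf M v v = 0"
proof
  assume "v \<noteq> 0" "pcls v \<in> conic M"
  then show "bf M v v = 0" unfolding conic_def bf_def using pcls_self[of v] by blast
next
  assume "v \<noteq> 0" "bf M v v = 0"
  then show "pcls v \<in> conic M" unfolding conic_def using pcls_point[of v]
    by (auto simp: pcls_def bf_def[symmetric])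
qed

lemma papply_pcls: "papply (mcls A) (pcls v) = pcls (A *v v)"
proof
  show "papply (mcls A) (pcls v) \<subseteq> pcls (A *v v)"
    unfolding papply_def mcls_def pcls_def by (auto simp: msmult_vec)
  show "pcls (A *v v) \<subseteq> papply (mcls A) (pcls v)"
  proof
    fix X assume "X \<in> pcls (A *v v)"
    then obtain c where c: "c \<noteq> 0" "X = c *s (A *v v)" unfolding pcls_def by auto
    then have "X = msmult c A *v v" by (simp add: msmult_vec)
    moreover have "msmult c A \<in> mcls A" "v \<in> pcls v" using c pcls_self unfolding mcls_def by auto
    ultimately show "X \<in> papply (mcls A) (pcls v)" unfolding papply_def by blast
  qed
qed

lemma mv_det_nz: "det (A::'a::field^'n^'n) \<noteq> 0 \<Longrightarrow> v \<noteq> 0 \<Longrightarrow> A *v v \<noteq> 0"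
  using det_nz_kernel by blast

locale conicM =
  fixes M :: "'a::field^3^3"
  assumes nd: "nondeg_conic_matrix M" and two: "(2::'a) \<noteq> 0"
begin

lemma symM: "transpose M = M" using nd by (simp add: nondeg_conic_matrix_def)
lemma detM: "det M \<noteq> 0" using nd by (simp add: nondeg_conic_matrix_def)
lemma bfs: "bf M x y = bf M y x" using bf_sym[OF symM] .
lemma dotpM: "dotp (M *v x) y = bf M x y" using dotp_Mv[OF symM] .
lemma Mv_nz: "v \<noteq> 0 \<Longrightarrow> M *v v \<noteq> 0" using mv_det_nz[OF detM] .

lemma on_tangent: "on_line (pcls x) (pcls (M *v a)) \<longleftrightarrow> bf M a x = 0"
  by (simp add: on_line_pcls dotpM)

lemma tangent_point:
  assumes "tangent M t"
  shows "\<exists>a. a \<noteq> 0 \<and> bf M a a = 0 \<and> t = pcls (M *v a) \<and> (\<forall>X\<in>conic M. on_line X t \<longrightarrow> X = pcls a)"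
proof -
  from assms have tl: "t \<in> pg_lines" and c1: "card {X \<in> conic M. on_line X t} = 1"
    unfolding tangent_def by auto
  then obtain X0 where X0: "{X \<in> conic M. on_line X t} = {X0}" by (meson card_1_singletonE)
  then have "X0 \<in> conic M" "on_line X0 t" by auto
  then have "X0 \<in> pg_points" unfolding conic_def by auto
  then obtain a where a: "a \<noteq> 0" "X0 = pcls a" using pg_points_iff by blast
  have aa: "bf M a a = 0" using conic_pcls[OF a(1)] \<open>X0 \<in> conic M\<close> a(2) by simp
  obtain u where u: "u \<noteq> 0" "t = pcls u" using tl pg_lines_iff by auto
  have ua: "dotp u a = 0" using \<open>on_line X0 t\<close> a u by (simp add: on_line_pcls)
  define m where "m = M *v a"
  have m0: "m \<noteq> 0" using Mv_nz[OF a(1)] m_def by simp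
  have uniq: "\<forall>X\<in>conic M. on_line X t \<longrightarrow> X = pcls a" using X0 a by auto
  have "t = pcls m"
  proof (cases "cross m u = 0")
    case True
    then obtain c where c: "m = c *s u" using cross_zero u(1) by blast
    then have "c \<noteq> 0" using m0 by auto
    then show ?thesis using c u(2) pcls_smult by metis
  next
    case False
    then obtain i where i: "cross m u $ i \<noteq> 0" by (metis vec_eq_iff zero_index)
    define d where "d = cross u (axis i 1)"
    have ud: "dotp u d = 0" by (simp add: d_def)
    have "dotp m d = cross m u $ i" by (simp add: d_def triple_swap)
    then have ad: "bf M a d \<noteq> 0" using i by (simp add: m_def dotpM)
    define y where "y = bf M d d *s a + (- (2 * bf M a d)) *s d"
    have uy: "dotp u y = 0" by (simp add: y_def ud ua)
    have yy: "bf M y y = 0" by (simp add: y_def aa bfs[of d a])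
    have ay: "bf M a y = - (2 * bf M a d * bf M a d)" by (simp add: y_def aa)
    then have ay0: "bf M a y \<noteq> 0" using two ad by simp
    then have y0: "y \<noteq> 0" by auto
    have "pcls y \<in> conic M" using conic_pcls[OF y0] yy by simp
    moreover have "on_line (pcls y) t" using uy u by (simp add: on_line_pcls)
    ultimately have "pcls y = pcls a" using uniq by blast
    then obtain c where "y = c *s a" using pcls_eq_iff by blast
    then have "bf M a y = 0" by (simp add: aa)
    then show ?thesis using ay0 by simp
  qed
  then show ?thesis using a aa uniq m_def by blast
qed

end


definition col3 :: "'a::field^3 \<Rightarrow> 'a^3 \<Rightarrow> 'a^3 \<Rightarrow> 'a^3^3" where
  "col3 x y z = (\<chi> i j. (if j = 1 then x else if j = 2 then y else z) $ i)"

lemma col3_nth: "col3 x y z $ i $ 1 = x $ i" "col3 x y z $ i $ 2 = y $ i" "col3 x y z $ i $ 3 = z $ i"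
  by (simp_all add: col3_def)

lemma vec3_eta: "(w::'a::field^3) = vector [w$1, w$2, w$3]"
  by (simp add: vec_eq_iff forall_3)

lemma col3_mv: "col3 x y z *v vector [p, q, r] = p *s x + q *s y + r *s z"
  by (simp add: vec_eq_iff forall_3 matrix_vector_mult_def sum_3 col3_nth algebra_simps)

lemma col3_mv_axes: "col3 x y z *v vector [1, 0, 0] = x" "col3 x y z *v vector [0, 1, 0] = y"
  "col3 x y z *v vector [0, 0, 1] = z"
  by (simp_all add: col3_mv)

lemma mm_col: "(A ** col3 x y z) $ i $ 1 = (A *v x) $ i" "(A ** col3 x y z) $ i $ 2 = (A *v y) $ i"
  "(A ** col3 x y z) $ i $ 3 = (A *v z) $ i"
  by (simp_all add: matrix_matrix_mult_def matrix_vector_mult_def col3_nth)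

lemma basis_eq:
  assumes "det (col3 x y z) \<noteq> 0" "A *v x = B *v x" "A *v y = B *v y" "A *v z = B *v (z::'a::field^3)"
  shows "A = B"
proof -
  have "A ** col3 x y z = B ** col3 x y z"
    using assms(2-4) by (simp add: vec_eq_iff forall_3 mm_col)
  then have "A ** col3 x y z ** matrix_inv (col3 x y z) = B ** col3 x y z ** matrix_inv (col3 x y z)" by simp
  then show ?thesis by (simp flip: matrix_mul_assoc add: inv_mat[OF assms(1)])
qed

lemma transpose_col3_mv: "transpose (col3 x y z) *v w = vector [dotp x w, dotp y w, dotp z w]"
  by (simp add: vec_eq_iff forall_3 matrix_vector_mult_def sum_3 col3_nth transpose_def dotp3)

lemma gram_entry0: "(transpose T ** M ** T) $ i $ j =
   dotp (\<chi> k. T $ k $ i) (M *v (\<chi> k. (T::'a::field^'n^'n) $ k $ j))"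
  unfolding matrix_matrix_mult_def matrix_vector_mult_def transpose_def dotp_def
  by (simp add: sum_distrib_left sum_distrib_right mult.assoc) (rule sum.swap)

lemma col3_cols: "(\<chi> k. col3 x y z $ k $ 1) = x" "(\<chi> k. col3 x y z $ k $ 2) = y" "(\<chi> k. col3 x y z $ k $ 3) = z"
  by (simp_all add: vec_eq_iff col3_nth)

lemma gram_entry: "(transpose (col3 x y z) ** M ** col3 x y z) $ i $ j =
   dotp ((if i = 1 then x else if i = 2 then y else z)) (M *v (if j = 1 then x else if j = 2 then y else z))"
  using exhaust_3[of i] exhaust_3[of j] by (auto simp: gram_entry0 col3_cols)

lemma gram_eq: "transpose (col3 x y z) ** M ** col3 x y z =
  mat3 (bf M x x) (bf M x y) (bf M x z) (bf M y x) (bf M y y) (bf M y z) (bf M z x) (bf M z y) (bf M z z)"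
  by (simp add: vec_eq_iff forall_3 gram_entry bf_def)

lemma gram_det: "det (mat3 (bf M x x) (bf M x y) (bf M x z) (bf M y x) (bf M y y) (bf M y z) (bf M z x) (bf M z y) (bf M z z)) \<noteq> 0
  \<Longrightarrow> det (col3 x y z) \<noteq> 0"
  by (simp flip: gram_eq add: det_mul)


definition reflm :: "'a::field^3^3 \<Rightarrow> 'a^3 \<Rightarrow> 'a^3^3" where
  "reflm M v = (\<chi> i j. (if i = j then 1 else 0) + (- (2 / bf M v v)) * v $ i * (M *v v) $ j)"

lemma rank1_mv: "(\<chi> i j. (if i = j then 1 else 0) + c * v $ i * m $ j) *v x = x + (c * dotp m x) *s (v::'a::field^'n)"
proof -
  have "((\<chi> i j. (if i = j then 1 else 0) + c * v $ i * m $ j) *v x) $ i = x $ i + (c * dotp m x) * v $ i" for i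
  proof -
    have e1: "(if i = j then 1 else 0) * x $ j = (if i = j then x $ j else 0)" for j by simp
    have "((\<chi> i j. (if i = j then 1 else 0) + c * v $ i * m $ j) *v x) $ i =
       (\<Sum>j\<in>UNIV. (if i = j then 1 else 0) * x $ j) + (\<Sum>j\<in>UNIV. (c * v $ i) * (m $ j * x $ j))"
      unfolding matrix_vector_mult_def by (simp add: sum.distrib[symmetric] distrib_right mult.assoc)
    also have "\<dots> = x $ i + (\<Sum>j\<in>UNIV. (c * v $ i) * (m $ j * x $ j))"
      unfolding e1 by simp
    also have "\<dots> = x $ i + (c * v $ i) * dotp m x"
      by (simp add: dotp_def sum_distrib_left)
    finally show ?thesis by simp
  qed
  then show ?thesis by (simp add: vec_eq_iff)
qed

lemma invol_img: "(\<And>X. X \<in> S \<Longrightarrow> f X \<in> S \<and> f (f X) = X) \<Longrightarrow> f ` S = S"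
  by (metis (no_types, lifting) image_eqI image_subsetI subsetI subset_antisym)

lemma cg_carrier: "g \<in> carrier (conic_group M) \<longleftrightarrow> g \<in> carrier pgl \<and> papply g ` conic M = conic M"
  by (simp add: conic_group_def)
lemma cg_one [simp]: "\<one>\<^bsub>conic_group M\<^esub> = mcls (mat 1)" by (simp add: conic_group_def)
lemma cg_mult [simp]: "g \<otimes>\<^bsub>conic_group M\<^esub> h = g \<otimes>\<^bsub>pgl\<^esub> h" by (simp add: conic_group_def)

context conicM begin

lemma reflm_mv: "reflm M v *v x = x + (- (2 / bf M v v) * bf M v x) *s v"
  unfolding reflm_def rank1_mv by (simp add: dotpM)

context
  fixes v :: "'a^3"
  assumes Q: "bf M v v \<noteq> 0"
begin

lemma rr: "reflm M v *v (reflm M v *v x) = x"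
  using Q by (simp add: reflm_mv bfs[of x v]) (simp add: vec_eq_iff field_simps)

lemma rsq: "reflm M v ** reflm M v = mat 1"
  by (simp add: matrix_eq flip: matrix_vector_mul_assoc add: rr)

lemma rdet: "det (reflm M v) \<noteq> 0"
  using arg_cong[OF rsq, of det] by (auto simp: det_mul)

lemma rbf: "bf M (reflm M v *v x) (reflm M v *v x) = bf M x x"
  using Q by (simp add: reflm_mv bfs[of x v])

lemma rline: "dotp u v = 0 \<Longrightarrow> dotp u (reflm M v *v x) = dotp u x"
  by (simp add: reflm_mv)

lemma rv: "reflm M v *v v = - v"
  using Q by (simp add: reflm_mv vec_eq_iff field_simps)

lemma rfix: "bf M v a = 0 \<Longrightarrow> reflm M v *v a = a"
  by (simp add: reflm_mv)

lemma rpp: "papply (mcls (reflm M v)) (papply (mcls (reflm M v)) (pcls x)) = pcls x"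
  by (simp add: papply_pcls rr)

lemma r_conic: "papply (mcls (reflm M v)) ` conic M = conic M"
proof (rule invol_img)
  fix X assume "X \<in> conic M"
  then obtain x where x: "x \<noteq> 0" "X = pcls x" "bf M x x = 0"
    using conic_pcls by (auto simp: conic_def pg_points_iff)
  have r0: "reflm M v *v x \<noteq> 0" using mv_det_nz[OF rdet x(1)] .
  have "pcls (reflm M v *v x) \<in> conic M" using conic_pcls[OF r0, of M] rbf[of x] x(3) by simp
  then show "papply (mcls (reflm M v)) X \<in> conic M \<and>
     papply (mcls (reflm M v)) (papply (mcls (reflm M v)) X) = X"
    using x by (simp add: papply_pcls rr)
qed

lemma r_center: "v \<noteq> 0 \<Longrightarrow> has_center (mcls (reflm M v)) (pcls v)"
  unfolding has_center_def fixes_line_def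
proof (intro conjI ballI impI)
  show "v \<noteq> 0 \<Longrightarrow> pcls v \<in> pg_points" by (rule pcls_point)
  fix L assume "L \<in> pg_lines" "on_line (pcls v) L"
  then obtain u where u: "L = pcls u" "dotp u v = 0" using pg_lines_iff on_line_pcls by metis
  show "papply (mcls (reflm M v)) ` {X \<in> pg_points. on_line X L} = {X \<in> pg_points. on_line X L}"
  proof (rule invol_img)
    fix X assume "X \<in> {X \<in> pg_points. on_line X L}"
    then obtain x where x: "x \<noteq> 0" "X = pcls x" "dotp u x = 0"
      using u on_line_pcls by (auto simp: pg_points_iff)
    have "reflm M v *v x \<noteq> 0" using mv_det_nz[OF rdet x(1)] .
    then show "papply (mcls (reflm M v)) X \<in> {X \<in> pg_points. on_line X L} \<and>
      papply (mcls (reflm M v)) (papply (mcls (reflm M v)) X) = X"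
      using x u rline[OF u(2)] by (simp add: papply_pcls rr pcls_point on_line_pcls)
  qed
qed

lemma r_props:
  assumes "a \<noteq> 0" "bf M v a = 0" "v \<noteq> 0"
  shows "mcls (reflm M v) \<in> carrier (conic_group M) \<and> mcls (reflm M v) \<noteq> \<one>\<^bsub>conic_group M\<^esub> \<and>
     mcls (reflm M v) \<otimes>\<^bsub>conic_group M\<^esub> mcls (reflm M v) = \<one>\<^bsub>conic_group M\<^esub> \<and>
     has_center (mcls (reflm M v)) (pcls v)"
proof (intro conjI)
  show "mcls (reflm M v) \<in> carrier (conic_group M)"
    using rdet r_conic by (simp add: cg_carrier pgl_carrier_iff)
  show "mcls (reflm M v) \<otimes>\<^bsub>conic_group M\<^esub> mcls (reflm M v) = \<one>\<^bsub>conic_group M\<^esub>"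
    by (simp add: rsq)
  show "has_center (mcls (reflm M v)) (pcls v)" using r_center assms(3) .
  show "mcls (reflm M v) \<noteq> \<one>\<^bsub>conic_group M\<^esub>"
  proof
    assume "mcls (reflm M v) = \<one>\<^bsub>conic_group M\<^esub>"
    then have "mcls (reflm M v) = mcls (mat 1)" by simp
    then obtain c where c: "reflm M v = msmult c (mat 1)" unfolding mcls_eq_iff by blast
    have "a = c *s a" using rfix[OF assms(2)] c by (simp add: msmult_vec)
    then have "c = 1" using smult_cancel[of 1 a c] assms(1) by simp
    have "- v = c *s v" using rv c by (simp add: msmult_vec)
    then have "c = -1" using smult_cancel[of "-1" v c] assms(3) by simp
    then show False using \<open>c = 1\<close> two by simp
  qed
qed

end
end


lemma center_line:
  assumes "has_center g X" "L \<in> pg_lines" "on_line X L" "Y \<in> pg_points" "on_line Y L"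
  shows "on_line (papply g Y) L"
proof -
  have "fixes_line g L" using assms(1-3) by (simp add: has_center_def)
  then have "papply g Y \<in> {X \<in> pg_points. on_line X L}" using assms(4,5) unfolding fixes_line_def by blast
  then show ?thesis by simp
qed

context conicM begin

context
  fixes a b v :: "'a^3" and k :: 'a
  assumes a0: "a \<noteq> 0" and b0: "b \<noteq> 0" and aa: "bf M a a = 0" and bb: "bf M b b = 0"
    and ab: "bf M a b = k" and k0: "k \<noteq> 0" and av: "bf M a v = 0" and bv: "bf M b v = 0"
    and vv: "bf M v v = - 2 * k"
    and ua: "\<forall>X\<in>conic M. on_line X (pcls (M *v a)) \<longrightarrow> X = pcls a"
    and ub: "\<forall>X\<in>conic M. on_line X (pcls (M *v b)) \<longrightarrow> X = pcls b"
begin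

lemma vv0: "bf M v v \<noteq> 0" using vv two k0 by simp
lemma v0: "v \<noteq> 0" using vv0 by auto

lemma detT: "det (col3 a b v) \<noteq> 0"
  apply (rule gram_det[of M])
  using two k0 by (simp add: mat3_det aa bb ab av bv vv bfs[of b a] bfs[of v a] bfs[of v b])

lemma cross_ab: "cross (M *v a) (M *v b) \<noteq> 0"
proof
  assume "cross (M *v a) (M *v b) = 0"
  then obtain c where "M *v a = c *s (M *v b)" using cross_zero Mv_nz[OF b0] by blast
  then have "M *v (a - c *s b) = 0" by simp
  then have "a - c *s b = 0" using mv_det_nz[OF detM, of "a - c *s b"] by blast
  then have "a = c *s b" by simp
  then show False using ab bb k0 by (simp add: bfs[of b a])
qed

lemma ua_line: "pcls (M *v a) \<in> pg_lines" using pcls_line Mv_nz[OF a0] .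
lemma ub_line: "pcls (M *v b) \<in> pg_lines" using pcls_line Mv_nz[OF b0] .

lemma dotp_ua: "dotp (cross v (a + b)) a \<noteq> 0"
proof
  assume h: "dotp (cross v (a + b)) a = 0"
  define w where "w = cross v b"
  have "dotp w a = 0" using h by (simp add: w_def)
  then have z: "dotp a w = 0" "dotp b w = 0" "dotp v w = 0"
    using dotp_sym[of a w] by (simp_all add: w_def dotp_sym[of b] dotp_sym[of v])
  have "transpose (col3 a b v) *v w = vector [dotp a w, dotp b w, dotp v w]" by (rule transpose_col3_mv)
  also have "\<dots> = 0" using z by (simp add: vec_eq_iff forall_3)
  finally have "transpose (col3 a b v) *v w = 0" .
  then have "w = 0" using mv_det_nz[of "transpose (col3 a b v)" w] detT by (auto simp: det_transpose)
  then have "cross v b = 0" using w_def by simp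
  then obtain c where c: "v = c *s b" using cross_zero b0 by blast
  then have "c * k = 0" using av ab by simp
  then have "v = 0" using c k0 by simp
  then show False using v0 by simp
qed

lemma uniq_alpha:
  assumes g: "g \<in> carrier (conic_group M)" "g \<noteq> \<one>\<^bsub>conic_group M\<^esub>"
    "g \<otimes>\<^bsub>conic_group M\<^esub> g = \<one>\<^bsub>conic_group M\<^esub>" "has_center g (pcls v)"
  shows "\<exists>B l. g = mcls B \<and> l \<noteq> 0 \<and> B *v a = l *s a \<and> B *v b = l *s b \<and> B *v v = (- l) *s v"
proof -
  have gc: "g \<in> carrier pgl" and gi: "papply g ` conic M = conic M" using g(1) by (auto simp: cg_carrier)
  obtain B where B: "g = mcls B" "det B \<noteq> 0" using pgl_carrier_E[OF gc] by blast
  have pc: "papply g X \<in> conic M" if "X \<in> conic M" for X using gi that by blast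
  have va: "on_line (pcls v) (pcls (M *v a))" using av by (simp add: on_tangent)
  have vb: "on_line (pcls v) (pcls (M *v b))" using bv by (simp add: on_tangent)
  have fix_pt: "\<exists>l. B *v x = l *s x" if x0: "x \<noteq> 0" and xx: "bf M x x = 0" and xv: "bf M x v = 0"
     and ux: "\<forall>X\<in>conic M. on_line X (pcls (M *v x)) \<longrightarrow> X = pcls x" for x
  proof -
    have xl: "pcls (M *v x) \<in> pg_lines" using pcls_line Mv_nz[OF x0] .
    have "on_line (pcls v) (pcls (M *v x))" using xv by (simp add: on_tangent)
    then have "on_line (papply g (pcls x)) (pcls (M *v x))"
      using center_line[OF g(4) xl] pcls_point[OF x0] xx by (simp add: on_tangent)
    moreover have "papply g (pcls x) \<in> conic M" using pc conic_pcls[OF x0] xx by simp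
    ultimately have "papply g (pcls x) = pcls x" using ux by blast
    then have "pcls (B *v x) = pcls x" using B by (simp add: papply_pcls)
    then show ?thesis using pcls_eq_iff by blast
  qed
  obtain la where la: "B *v a = la *s a" using fix_pt[OF a0 aa av ua] by blast
  obtain lb where lb: "B *v b = lb *s b" using fix_pt[OF b0 bb bv ub] by blast
  have "on_line (papply g (pcls v)) (pcls (M *v a))" "on_line (papply g (pcls v)) (pcls (M *v b))"
    using center_line[OF g(4) ua_line va pcls_point[OF v0] va] center_line[OF g(4) ub_line vb pcls_point[OF v0] vb] .
  then have "dotp (M *v a) (B *v v) = 0" "dotp (M *v b) (B *v v) = 0"
    using B by (simp_all add: papply_pcls on_line_pcls)
  then obtain s where s: "B *v v = s *s cross (M *v a) (M *v b)" using two_planes cross_ab by blast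
  have "dotp (M *v a) v = 0" "dotp (M *v b) v = 0" using av bv by (simp_all add: dotpM)
  then obtain s' where s': "v = s' *s cross (M *v a) (M *v b)" using two_planes cross_ab by blast
  then have "s' \<noteq> 0" using v0 by auto
  then have lv: "B *v v = (s / s') *s v" using s s' by (simp add: vector_smult_assoc)
  define lv where "lv = s / s'"
  have lab: "la = lb"
  proof -
    define u where "u = cross v (a + b)"
    have ua0: "dotp u a \<noteq> 0" using dotp_ua u_def by simp
    then have "u \<noteq> 0" by auto
    then have ul: "pcls u \<in> pg_lines" by (rule pcls_line)
    have "bf M a (a + b) = k" using aa ab by simp
    then have ab0: "a + b \<noteq> 0" using k0 by (metis bf_zero(2))
    have uab: "dotp u (a + b) = 0" unfolding u_def by (rule dotp_cross2')
    have "on_line (pcls v) (pcls u)" "on_line (pcls (a + b)) (pcls u)"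
      unfolding on_line_pcls using uab by (simp_all only: u_def dotp_cross1')
    then have "on_line (papply g (pcls (a + b))) (pcls u)"
      using center_line[OF g(4) ul _ pcls_point[OF ab0]] by blast
    then have "dotp u (B *v (a + b)) = 0" using B by (simp add: papply_pcls on_line_pcls)
    then have e1: "la * dotp u a + lb * dotp u b = 0" using la lb by simp
    have e2: "dotp u a + dotp u b = 0" using uab by simp
    then have "dotp u b = - dotp u a" by (simp add: eq_neg_iff_add_eq_0 add.commute)
    then have "(la - lb) * dotp u a = 0" using e1 by (simp add: algebra_simps)
    then show ?thesis using ua0 by simp
  qed
  have "mcls (B ** B) = mcls (mat 1)" using g(3) B by simp
  then obtain c where c: "B ** B = msmult c (mat 1)" using mcls_eq_iff by blast
  have "(B ** B) *v a = (la * la) *s a" using la by (simp flip: matrix_vector_mul_assoc)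
  then have "c *s a = (la * la) *s a" using c by (simp add: msmult_vec)
  then have c1: "c = la * la" using smult_cancel a0 by blast
  have "(B ** B) *v v = (lv * lv) *s v" using lv by (simp flip: matrix_vector_mul_assoc add: lv_def)
  then have "c *s v = (lv * lv) *s v" using c by (simp add: msmult_vec)
  then have c2: "c = lv * lv" using smult_cancel v0 by blast
  have "la \<noteq> 0"
  proof
    assume "la = 0"
    then have "B *v a = 0" using la by simp
    then show False using mv_det_nz[OF B(2) a0] by simp
  qed
  have "lv \<noteq> la"
  proof
    assume h: "lv = la"
    have "B = msmult la (mat 1)"
      by (rule basis_eq[OF detT]) (simp_all add: msmult_vec la lb lab h lv[folded lv_def])
    then have "g = \<one>\<^bsub>conic_group M\<^esub>" using B \<open>la \<noteq> 0\<close> by (simp add: mcls_eq_iff) blast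
    then show False using g(2) by simp
  qed
  moreover have "(lv - la) * (lv + la) = 0" using c1 c2 by (simp add: algebra_simps)
  ultimately have "lv = - la" by (simp add: eq_neg_iff_add_eq_0)
  then show ?thesis using B la lb lab lv \<open>la \<noteq> 0\<close> lv_def by (intro exI[of _ B] exI[of _ la]) auto
qed

lemma alpha_eq:
  assumes K: "K *v a = a" "K *v b = b" "K *v v = - v"
  shows "alpha M (pcls v) = mcls K"
proof -
  let ?P = "\<lambda>g. g \<in> carrier (conic_group M) \<and> g \<noteq> \<one>\<^bsub>conic_group M\<^esub> \<and>
       g \<otimes>\<^bsub>conic_group M\<^esub> g = \<one>\<^bsub>conic_group M\<^esub> \<and> has_center g (pcls v)"
  have U: "g = mcls K" if Pg: "?P g" for g
  proof -
    obtain B l where B: "g = mcls B" "l \<noteq> 0" "B *v a = l *s a" "B *v b = l *s b" "B *v v = (- l) *s v"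
      using uniq_alpha Pg by blast
    have "B = msmult l K"
      by (rule basis_eq[OF detT]) (simp_all add: msmult_vec B K)
    then show ?thesis using B(1,2) by (simp add: mcls_eq_iff) blast
  qed
  have "bf M v a = 0" using av by (simp add: bfs)
  then have "?P (mcls (reflm M v))" using r_props[OF vv0 a0 _ v0] by blast
  then have "?P (mcls K)" using U by metis
  then have "(THE g. ?P g) = mcls K" using U by (rule the_equality)
  then show ?thesis by (simp add: alpha_def)
qed

end
end


context conicM begin

definition uniqpt :: "'a^3 \<Rightarrow> bool" where
  "uniqpt x \<longleftrightarrow> (\<forall>X\<in>conic M. on_line X (pcls (M *v x)) \<longrightarrow> X = pcls x)"

lemma tangent_pt: "tangent M t \<Longrightarrow> \<exists>a. a \<noteq> 0 \<and> bf M a a = 0 \<and> t = pcls (M *v a) \<and> uniqpt a"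
  using tangent_point unfolding uniqpt_def by blast

lemma uniqpt_smult: "c \<noteq> 0 \<Longrightarrow> uniqpt x \<Longrightarrow> uniqpt (c *s x)"
  unfolding uniqpt_def by (simp add: pcls_smult)

lemma tpair_nz:
  assumes "x \<noteq> 0" "y \<noteq> 0" "bf M y y = 0" "uniqpt x" "pcls (M *v x) \<noteq> pcls (M *v y)"
  shows "bf M x y \<noteq> 0"
proof
  assume "bf M x y = 0"
  then have "on_line (pcls y) (pcls (M *v x))" by (simp add: on_tangent)
  moreover have "pcls y \<in> conic M" using conic_pcls[OF assms(2)] assms(3) by simp
  ultimately have "pcls y = pcls x" using assms(4) unfolding uniqpt_def by blast
  then obtain c where "c \<noteq> 0" "y = c *s x" using pcls_eq_iff by blast
  then have "pcls (M *v y) = pcls (M *v x)" by (simp add: pcls_smult)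
  then show False using assms(5) by simp
qed

lemma config:
  assumes "tangent M t1" "tangent M t2" "tangent M t3" "t1 \<noteq> t2" "t2 \<noteq> t3" "t1 \<noteq> t3"
  shows "\<exists>a b c k. a \<noteq> 0 \<and> b \<noteq> 0 \<and> c \<noteq> 0 \<and> bf M a a = 0 \<and> bf M b b = 0 \<and> bf M c c = 0 \<and>
    bf M a b = k \<and> bf M a c = k \<and> bf M b c = k \<and> k \<noteq> 0 \<and>
    t1 = pcls (M *v a) \<and> t2 = pcls (M *v b) \<and> t3 = pcls (M *v c) \<and> uniqpt a \<and> uniqpt b \<and> uniqpt c"
proof -
  obtain a b0 c0 where a: "a \<noteq> 0" "bf M a a = 0" "t1 = pcls (M *v a)" "uniqpt a"
    and b: "b0 \<noteq> 0" "bf M b0 b0 = 0" "t2 = pcls (M *v b0)" "uniqpt b0"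
    and c: "c0 \<noteq> 0" "bf M c0 c0 = 0" "t3 = pcls (M *v c0)" "uniqpt c0"
    using tangent_pt assms(1-3) by metis
  have nab: "bf M a b0 \<noteq> 0" using tpair_nz[OF a(1) b(1) b(2) a(4)] a(3) b(3) assms(4) by simp
  have nac: "bf M a c0 \<noteq> 0" using tpair_nz[OF a(1) c(1) c(2) a(4)] a(3) c(3) assms(6) by simp
  have nbc: "bf M b0 c0 \<noteq> 0" using tpair_nz[OF b(1) c(1) c(2) b(4)] b(3) c(3) assms(5) by simp
  define mu where "mu = bf M a c0 / bf M b0 c0"
  define nu where "nu = bf M a b0 / bf M b0 c0"
  define k where "k = mu * bf M a b0"
  have mu0: "mu \<noteq> 0" and nu0: "nu \<noteq> 0" using nab nac nbc by (simp_all add: mu_def nu_def)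
  have "a \<noteq> 0 \<and> mu *s b0 \<noteq> 0 \<and> nu *s c0 \<noteq> 0 \<and> bf M a a = 0 \<and> bf M (mu *s b0) (mu *s b0) = 0 \<and>
    bf M (nu *s c0) (nu *s c0) = 0 \<and>
    bf M a (mu *s b0) = k \<and> bf M a (nu *s c0) = k \<and> bf M (mu *s b0) (nu *s c0) = k \<and> k \<noteq> 0 \<and>
    t1 = pcls (M *v a) \<and> t2 = pcls (M *v (mu *s b0)) \<and> t3 = pcls (M *v (nu *s c0)) \<and>
    uniqpt a \<and> uniqpt (mu *s b0) \<and> uniqpt (nu *s c0)"
    using a b c mu0 nu0 nab nac nbc uniqpt_smult[OF mu0 b(4)] uniqpt_smult[OF nu0 c(4)]
    by (simp add: k_def pcls_smult) (simp add: mu_def nu_def field_simps)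
  then show ?thesis by blast
qed

lemma cross_nz:
  assumes "y \<noteq> 0" "bf M y y = 0" "bf M x y \<noteq> 0"
  shows "cross (M *v x) (M *v y) \<noteq> 0"
proof
  assume "cross (M *v x) (M *v y) = 0"
  then obtain c where "M *v x = c *s (M *v y)" using cross_zero Mv_nz[OF assms(1)] by blast
  then have "M *v (x - c *s y) = 0" by simp
  then have "x - c *s y = 0" using mv_det_nz[OF detM, of "x - c *s y"] by blast
  then have "x = c *s y" by simp
  then show False using assms(2,3) by simp
qed

lemma point_eq:
  assumes "P \<in> pg_points" "on_line P (pcls (M *v x))" "on_line P (pcls (M *v y))"
    "cross (M *v x) (M *v y) \<noteq> 0" "v \<noteq> 0" "bf M x v = 0" "bf M y v = 0"
  shows "P = pcls v"
proof -
  obtain w where w: "w \<noteq> 0" "P = pcls w" using assms(1) pg_points_iff by blast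
  have "dotp (M *v x) w = 0" "dotp (M *v y) w = 0" using assms(2,3) w(2) by (simp_all add: on_line_pcls)
  then obtain s where s: "w = s *s cross (M *v x) (M *v y)" using two_planes assms(4) by blast
  have "dotp (M *v x) v = 0" "dotp (M *v y) v = 0" using assms(6,7) by (simp_all add: dotpM)
  then obtain s' where s': "v = s' *s cross (M *v x) (M *v y)" using two_planes assms(4) by blast
  then have "s' \<noteq> 0" using assms(5) by auto
  have "s \<noteq> 0" using s w(1) by auto
  have "w = (s / s') *s v" using s s' \<open>s' \<noteq> 0\<close> by (simp add: vector_smult_assoc)
  then show ?thesis using w(2) \<open>s \<noteq> 0\<close> \<open>s' \<noteq> 0\<close> by (simp add: pcls_smult)
qed

end


lemma mat3_mv: "mat3 a b c d e f g h i *v vector [x, y, z] = vector [a*x + b*y + c*z, d*x + e*y + f*z, g*x + h*y + i*z]"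
  by (simp add: vec_eq_iff forall_3 matrix_vector_mult_def sum_3 mat3_def)

lemma KK_fix: assumes "det Cm \<noteq> 0" "S3 (imap A) *v w = w'"
  shows "KK Cm A *v (Cm *v w) = Cm *v w'"
proof -
  have "KK Cm A *v (Cm *v w) = Cm *v (S3 (imap A) *v ((matrix_inv Cm ** Cm) *v w))"
    by (simp add: KK_def matrix_vector_mul_assoc matrix_mul_assoc)
  then show ?thesis using assms by (simp add: inv_mat)
qed

lemma KK_fix2: "det Cm \<noteq> 0 \<Longrightarrow> x = Cm *v w \<Longrightarrow> y = Cm *v w' \<Longrightarrow> S3 (imap A) *v w = w'
   \<Longrightarrow> KK Cm A *v x = y"
  using KK_fix by blast

context fields2 begin

lemma main_config:
  fixes M :: "'a^3^3" and t1 t2 t3 P Q R :: "('a^3) set"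
  assumes two: "(2::'a) \<noteq> 0" and nd: "nondeg_conic_matrix M"
    and "tangent M t1" and "tangent M t2" and "tangent M t3"
    and "t1 \<noteq> t2" and "t2 \<noteq> t3" and "t1 \<noteq> t3"
    and P: "P \<in> pg_points" "on_line P t1" "on_line P t2"
    and Q: "Q \<in> pg_points" "on_line Q t2" "on_line Q t3"
    and R: "R \<in> pg_points" "on_line R t1" "on_line R t3"
  shows "\<exists>Cm. det Cm \<noteq> 0 \<and> {alpha M P, alpha M Q, alpha M R} = Phi Cm ` (gens2 :: ('b^2^2) set set)"
proof -
  interpret conicM M using nd two by unfold_locales
  obtain a b c k where cf: "a \<noteq> 0" "b \<noteq> 0" "c \<noteq> 0" "bf M a a = 0" "bf M b b = 0" "bf M c c = 0"
    "bf M a b = k" "bf M a c = k" "bf M b c = k" "k \<noteq> 0"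
    "t1 = pcls (M *v a)" "t2 = pcls (M *v b)" "t3 = pcls (M *v c)" "uniqpt a" "uniqpt b" "uniqpt c"
    using config assms(3-8) by blast
  have sy: "bf M b a = k" "bf M c a = k" "bf M c b = k" using cf bfs by metis+
  define vP where "vP = a + b - c"
  define vQ where "vQ = b + c - a"
  define vR where "vR = a + c - b"
  define Cm where "Cm = col3 a vP b"
  have bfP: "bf M a vP = 0" "bf M b vP = 0" "bf M vP vP = - 2 * k" "bf M vP a = 0" "bf M vP b = 0"
    using cf sy by (simp_all add: vP_def)
  have bfQ: "bf M b vQ = 0" "bf M c vQ = 0" "bf M vQ vQ = - 2 * k"
    using cf sy by (simp_all add: vQ_def)
  have bfR: "bf M a vR = 0" "bf M c vR = 0" "bf M vR vR = - 2 * k"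
    using cf sy by (simp_all add: vR_def)
  have nzv: "vP \<noteq> 0" "vQ \<noteq> 0" "vR \<noteq> 0" using bfP(3) bfQ(3) bfR(3) two cf(10) by auto
  have detC: "det Cm \<noteq> 0"
    unfolding Cm_def
    apply (rule gram_det[of M])
    using two cf sy bfP by (simp add: mat3_det)
  have Pe: "P = pcls vP"
    using point_eq[OF P(1) _ _ cross_nz[OF cf(2) cf(5)] nzv(1) bfP(1) bfP(2)] P cf by simp
  have Qe: "Q = pcls vQ"
    using point_eq[OF Q(1) _ _ cross_nz[OF cf(3) cf(6)] nzv(2) bfQ(1) bfQ(2)] Q cf by simp
  have Re: "R = pcls vR"
    using point_eq[OF R(1) _ _ cross_nz[OF cf(3) cf(6)] nzv(3) bfR(1) bfR(2)] R cf by simp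
  have ua: "\<forall>X\<in>conic M. on_line X (pcls (M *v a)) \<longrightarrow> X = pcls a" using cf(14) by (simp add: uniqpt_def)
  have ub: "\<forall>X\<in>conic M. on_line X (pcls (M *v b)) \<longrightarrow> X = pcls b" using cf(15) by (simp add: uniqpt_def)
  have uc: "\<forall>X\<in>conic M. on_line X (pcls (M *v c)) \<longrightarrow> X = pcls c" using cf(16) by (simp add: uniqpt_def)
  have ea: "a = Cm *v vector [1, 0, 0]" by (simp add: Cm_def col3_mv)
  have eb: "b = Cm *v vector [0, 0, 1]" by (simp add: Cm_def col3_mv)
  have ec: "c = Cm *v vector [1, -1, 1]" by (simp add: Cm_def col3_mv vP_def vec_eq_iff algebra_simps)
  have eP: "vP = Cm *v vector [0, 1, 0]" by (simp add: Cm_def col3_mv)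
  have eQ: "vQ = Cm *v vector [0, -1, 2]" by (simp add: Cm_def col3_mv vP_def vQ_def vec_eq_iff algebra_simps)
  have eQ': "- vQ = Cm *v vector [0, 1, -2]" by (simp add: Cm_def col3_mv vP_def vQ_def vec_eq_iff algebra_simps)
  have eR: "vR = Cm *v vector [2, -1, 0]" by (simp add: Cm_def col3_mv vP_def vR_def vec_eq_iff algebra_simps)
  have eR': "- vR = Cm *v vector [-2, 1, 0]" by (simp add: Cm_def col3_mv vP_def vR_def vec_eq_iff algebra_simps)
  have eP': "- vP = Cm *v vector [0, -1, 0]" by (simp add: Cm_def col3_mv)
  have KP: "KK Cm (AP::'b^2^2) *v a = a" "KK Cm (AP::'b^2^2) *v b = b" "KK Cm (AP::'b^2^2) *v vP = - vP"
    by (rule KK_fix2[OF detC ea ea] KK_fix2[OF detC eb eb] KK_fix2[OF detC eP eP'], simp add: S3_mat2 mat3_mv)+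
  have KQ: "KK Cm (AQ::'b^2^2) *v b = b" "KK Cm (AQ::'b^2^2) *v c = c" "KK Cm (AQ::'b^2^2) *v vQ = - vQ"
    by (rule KK_fix2[OF detC eb eb] KK_fix2[OF detC ec ec] KK_fix2[OF detC eQ eQ'], simp add: S3_mat2 mat3_mv)+
  have KR: "KK Cm (AR::'b^2^2) *v a = a" "KK Cm (AR::'b^2^2) *v c = c" "KK Cm (AR::'b^2^2) *v vR = - vR"
    by (rule KK_fix2[OF detC ea ea] KK_fix2[OF detC ec ec] KK_fix2[OF detC eR eR'], simp add: S3_mat2 mat3_mv)+
  have aP: "alpha M P = Phi Cm (mcls (AP::'b^2^2))"
    using alpha_eq[OF cf(1) cf(2) cf(4) cf(5) cf(7) cf(10) bfP(1) bfP(2) bfP(3) ua ub KP]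
    by (simp add: Pe Phi_mcls[OF detC])
  have aQ: "alpha M Q = Phi Cm (mcls (AQ::'b^2^2))"
    using alpha_eq[OF cf(2) cf(3) cf(5) cf(6) cf(9) cf(10) bfQ(1) bfQ(2) bfQ(3) ub uc KQ]
    by (simp add: Qe Phi_mcls[OF detC])
  have aR: "alpha M R = Phi Cm (mcls (AR::'b^2^2))"
    using alpha_eq[OF cf(1) cf(3) cf(4) cf(6) cf(8) cf(10) bfR(1) bfR(2) bfR(3) ua uc KR]
    by (simp add: Re Phi_mcls[OF detC])
  show ?thesis using detC aP aQ aR by (intro exI[of _ Cm]) (simp add: gens2_def)
qed

end


lemma iso_sub:
  assumes "group (G\<lparr>carrier := S\<rparr>)" "S \<subseteq> carrier G" "h \<in> hom G H" "inj_on h (carrier G)"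
  shows "H\<lparr>carrier := h ` S\<rparr> \<cong> G\<lparr>carrier := S\<rparr>"
proof -
  have "h \<in> iso (G\<lparr>carrier := S\<rparr>) (H\<lparr>carrier := h ` S\<rparr>)"
  proof (rule isoI)
    show "h \<in> hom (G\<lparr>carrier := S\<rparr>) (H\<lparr>carrier := h ` S\<rparr>)"
      using assms(2,3) by (auto simp: hom_def)
    show "bij_betw h (carrier (G\<lparr>carrier := S\<rparr>)) (carrier (H\<lparr>carrier := h ` S\<rparr>))"
      using inj_on_subset[OF assms(4,2)] by (simp add: bij_betw_def)
  qed
  then have "G\<lparr>carrier := S\<rparr> \<cong> H\<lparr>carrier := h ` S\<rparr>" by (rule is_isoI)
  then show ?thesis using group.iso_sym[OF assms(1)] by blast
qed

context fields2 begin

lemma two_a: "odd p \<Longrightarrow> (2::'a) \<noteq> 0"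
  using of_int_zero_iff[OF pr ca0, of 2] p_gt2 by (auto dest: zdvd_imp_le)
lemma two_b: "odd p \<Longrightarrow> (2::'b) \<noteq> 0"
  using of_int_zero_iff[OF pr cb0, of 2] p_gt2 by (auto dest: zdvd_imp_le)

lemma num_b: assumes "odd p" shows "\<exists>k::nat. (t::'b) = of_nat k * (-2)"
proof -
  obtain x where x: "t / (-2) = (of_int x :: 'b)" using surjb by blast
  have "[x mod int p = x] (mod int p)" by (simp add: cong_def)
  then have "(of_int (x mod int p) :: 'b) = of_int x" using of_int_eq_iff_cong[OF pr cb0] by blast
  moreover have "x mod int p \<ge> 0" using prime_gt_0_nat[OF pr] by simp
  ultimately have "(of_nat (nat (x mod int p)) :: 'b) = t / (-2)" using x by simp
  then have "t = of_nat (nat (x mod int p)) * (-2)" using two_b[OF assms] by (simp add: field_simps)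
  then show ?thesis by blast
qed

end

theorem mainTheorem10:
  fixes M :: "'a::{field,finite}^3^3"
    and p n :: nat
    and t1 t2 t3 P Q R :: "('a^3) set"
  assumes "prime p" and "odd p" and "n \<ge> 1" and "CARD('a) = p ^ n"
    and "nondeg_conic_matrix M"
    and "tangent M t1" and "tangent M t2" and "tangent M t3"
    and "t1 \<noteq> t2" and "t2 \<noteq> t3" and "t1 \<noteq> t3"
    and "P \<in> pg_points" and "on_line P t1" and "on_line P t2"
    and "Q \<in> pg_points" and "on_line Q t2" and "on_line Q t3"
    and "R \<in> pg_points" and "on_line R t1" and "on_line R t3"
    and "CARD('b::{field,finite}) = p"
  shows "(p mod 4 = 1 \<longrightarrow>
            (pgl \<lparr> carrier := generate pgl {alpha M P, alpha M Q, alpha M R} \<rparr>)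
              \<cong> (psl :: ('b^2^2) set monoid))
       \<and> (p mod 4 = 3 \<longrightarrow>
            (pgl \<lparr> carrier := generate pgl {alpha M P, alpha M Q, alpha M R} \<rparr>)
              \<cong> (pgl :: ('b^2^2) set monoid))"
proof -
  interpret fields2 p n "TYPE('a)" "TYPE('b)"
    using assms(1,4,21) by unfold_locales
  have two: "(2::'a) \<noteq> 0" using two_a[OF assms(2)] .
  have twob: "(2::'b) \<noteq> 0" using two_b[OF assms(2)] .
  obtain Cm where Cm: "det Cm \<noteq> 0" "{alpha M P, alpha M Q, alpha M R} = Phi Cm ` (gens2 :: ('b^2^2) set set)"
    using main_config[OF two assms(5-20)] by blast
  have gh: "group_hom (pgl :: ('b^2^2) set monoid) (pgl :: ('a^3^3) set monoid) (Phi Cm)"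
    unfolding group_hom_def group_hom_axioms_def
    using group_pgl[where 'a='b and 'n=2] group_pgl[where 'a='a and 'n=3] Phi_hom[OF Cm(1)] by blast
  have G: "generate pgl {alpha M P, alpha M Q, alpha M R} = Phi Cm ` generate pgl (gens2 :: ('b^2^2) set set)"
    unfolding Cm(2) by (rule group_hom.generate_img[OF gh gens2_carrier[OF twob]])
  have num: "\<And>t::'b. \<exists>k::nat. t = of_nat k * (-2)" using num_b[OF assms(2)] by blast
  show ?thesis
  proof (intro conjI impI)
    assume p1: "p mod 4 = 1"
    have "generate pgl (gens2 :: ('b^2^2) set set) = carrier psl"
      by (rule gen_psl[OF twob num sq1[OF assms(2) p1]])
    then have "generate pgl {alpha M P, alpha M Q, alpha M R} = Phi Cm ` carrier (psl :: ('b^2^2) set monoid)"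
      using G by simp
    moreover have "(pgl :: ('a^3^3) set monoid)\<lparr>carrier := Phi Cm ` carrier (psl :: ('b^2^2) set monoid)\<rparr>
       \<cong> (pgl :: ('b^2^2) set monoid)\<lparr>carrier := carrier (psl :: ('b^2^2) set monoid)\<rparr>"
      apply (rule iso_sub)
      using group_psl[where 'a='b and 'n=2] psl_carrier_sub[where 'a='b and 'n=2] Phi_hom[OF Cm(1)] Phi_inj[OF Cm(1)]
      by (simp_all add: psl_def)
    ultimately show "(pgl \<lparr> carrier := generate pgl {alpha M P, alpha M Q, alpha M R} \<rparr>)
              \<cong> (psl :: ('b^2^2) set monoid)" by (simp add: psl_def)
  next
    assume p3: "p mod 4 = 3"
    have "generate pgl (gens2 :: ('b^2^2) set set) = carrier pgl"
      by (rule gen_pgl[OF twob num sq3b[OF assms(2) p3]])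
    then have "generate pgl {alpha M P, alpha M Q, alpha M R} = Phi Cm ` carrier (pgl :: ('b^2^2) set monoid)"
      using G by simp
    moreover have "(pgl :: ('a^3^3) set monoid)\<lparr>carrier := Phi Cm ` carrier (pgl :: ('b^2^2) set monoid)\<rparr>
       \<cong> (pgl :: ('b^2^2) set monoid)\<lparr>carrier := carrier (pgl :: ('b^2^2) set monoid)\<rparr>"
      apply (rule iso_sub)
      using group_pgl[where 'a='b and 'n=2] Phi_hom[OF Cm(1)] Phi_inj[OF Cm(1)]
      by simp_all
    ultimately show "(pgl \<lparr> carrier := generate pgl {alpha M P, alpha M Q, alpha M R} \<rparr>)
              \<cong> (pgl :: ('b^2^2) set monoid)" by simp
  qed
qed


end
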